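(* Let $\mathbb{C}$ be a pointed protomodular category and let $X$ be an object of $\mathbb{C}$ such that the generic split extension with kernel $X$ exists. Then the following two conditions are equivalent: (1) there is a generic split extension with kernel $[X]$ and the conjugation morphism $c_X:X\to[X]$ is a characteristic monomorphism; (2) $X$ has trivial center and $[X]$ is strong-complete.
   Context: $\mathbb{C}$ is pointed with finite limits; protomodular means the split short five lemma holds. A split extension is $X\xrightarrow{\kappa}A\underset{\beta}{\overset{\alpha}{\rightleftarrows}}B$ with $\alpha\beta=1_B$, $\kappa$ a kernel of $\alpha$. A generic split extension with kernel $X$, written $X\xrightarrow{k}[X]\ltimes X\underset{i}{\overset{p_1}{\rightleftarrows}}[X]$, is a terminal object in the category of split extensions with kernel $X$ and morphisms whose kernel component is $1_X$. The conjugation morphism $c_X:X\to[X]$ is the codomain component of the unique such morphism from $X\xrightarrow{\langle0,1\rangle}X\times X\underset{\langle1,1\rangle}{\overset{\pi_1}{\rightleftarrows}}X$ to the generic one. The center of $X$ is the terminal object among morphisms $g:B\to X$ commuting with $1_X$ (some $\varphi:B\times X\to X$ has $\varphi\langle1,0\rangle=g$, $\varphi\langle0,1\rangle=1_X$); trivial center means it is $0$. A protosplit monomorphism is a kernel of a split epimorphism; an object is strong-complete if every protosplit monomorphism with domain it is a split monomorphism with a unique retraction. A monomorphism $m:S\to Y$ is Bourn-normal if there is an equivalence relation $(R,r_1,r_2)$ on $Y$ and $\tilde m:S\times S\to R$ with $r_1\tilde m=m\pi_1$, $r_2\tilde m=m\pi_2$ and the square $r_1\tilde m=m\pi_1$ a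 pullback. A morphism $u:S\to X$ is a characteristic monomorphism if for every Bourn-normal monomorphism $n:X\to Y$ the composite $nu$ is a Bourn-normal monomorphism. *)

theory Defs
  imports Main
begin

text \<open>A (small-or-large) category presented by carriers: objects of type 'o,
  arrows of type 'm.  Comp C g f denotes the composite g after f.\<close>

record ('o, 'm) cat =
  Obj  :: "'o set"
  Arr  :: "'m set"
  Dom  :: "'m \<Rightarrow> 'o"
  Cod  :: "'m \<Rightarrow> 'o"
  Id   :: "'o \<Rightarrow> 'm"
  Comp :: "'m \<Rightarrow> 'm \<Rightarrow> 'm"

definition hom :: "('o, 'm) cat \<Rightarrow> 'o \<Rightarrow> 'o \<Rightarrow> 'm set" where
  "hom C a b = {f \<in> Arr C. Dom C f = a \<and> Cod C f = b}"

definition category :: "('o, 'm) cat \<Rightarrow> bool" where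
  "category C \<longleftrightarrow>
     (\<forall>f \<in> Arr C. Dom C f \<in> Obj C \<and> Cod C f \<in> Obj C) \<and>
     (\<forall>a \<in> Obj C. Id C a \<in> hom C a a) \<and>
     (\<forall>f \<in> Arr C. \<forall>g \<in> Arr C. Cod C f = Dom C g \<longrightarrow>
         Comp C g f \<in> hom C (Dom C f) (Cod C g)) \<and>
     (\<forall>f \<in> Arr C. \<forall>g \<in> Arr C. \<forall>h \<in> Arr C.
         Cod C f = Dom C g \<and> Cod C g = Dom C h \<longrightarrow>
         Comp C h (Comp C g f) = Comp C (Comp C h g) f) \<and>
     (\<forall>f \<in> Arr C. Comp C (Id C (Cod C f)) f = f \<and> Comp C f (Id C (Dom C f)) = f)"

definition is_iso :: "('o, 'm) cat \<Rightarrow> 'm \<Rightarrow> bool" where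
  "is_iso C f \<longleftrightarrow> f \<in> Arr C \<and>
     (\<exists>g \<in> hom C (Cod C f) (Dom C f).
        Comp C g f = Id C (Dom C f) \<and> Comp C f g = Id C (Cod C f))"

definition is_mono :: "('o, 'm) cat \<Rightarrow> 'm \<Rightarrow> bool" where
  "is_mono C f \<longleftrightarrow> f \<in> Arr C \<and>
     (\<forall>g h. g \<in> Arr C \<and> h \<in> Arr C \<and> Cod C g = Dom C f \<and> Cod C h = Dom C f \<and>
        Dom C g = Dom C h \<and> Comp C f g = Comp C f h \<longrightarrow> g = h)"

definition is_terminal :: "('o, 'm) cat \<Rightarrow> 'o \<Rightarrow> bool" where
  "is_terminal C t \<longleftrightarrow> t \<in> Obj C \<and> (\<forall>a \<in> Obj C. \<exists>!f. f \<in> hom C a t)"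

definition is_initial :: "('o, 'm) cat \<Rightarrow> 'o \<Rightarrow> bool" where
  "is_initial C t \<longleftrightarrow> t \<in> Obj C \<and> (\<forall>a \<in> Obj C. \<exists>!f. f \<in> hom C t a)"

definition is_zero_obj :: "('o, 'm) cat \<Rightarrow> 'o \<Rightarrow> bool" where
  "is_zero_obj C z \<longleftrightarrow> is_initial C z \<and> is_terminal C z"

definition pointed :: "('o, 'm) cat \<Rightarrow> bool" where
  "pointed C \<longleftrightarrow> (\<exists>z. is_zero_obj C z)"

definition zero_arr :: "('o, 'm) cat \<Rightarrow> 'm \<Rightarrow> bool" where
  "zero_arr C f \<longleftrightarrow> f \<in> Arr C \<and>
     (\<exists>z g h. is_zero_obj C z \<and> g \<in> hom C (Dom C f) z \<and> h \<in> hom C z (Cod C f) \<and>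
        f = Comp C h g)"

definition is_pullback :: "('o, 'm) cat \<Rightarrow> 'm \<Rightarrow> 'm \<Rightarrow> 'm \<Rightarrow> 'm \<Rightarrow> bool" where
  "is_pullback C f g p q \<longleftrightarrow>
     f \<in> Arr C \<and> g \<in> Arr C \<and> Cod C f = Cod C g \<and>
     p \<in> hom C (Dom C p) (Dom C f) \<and> q \<in> hom C (Dom C p) (Dom C g) \<and>
     Comp C f p = Comp C g q \<and>
     (\<forall>x y. x \<in> Arr C \<and> y \<in> Arr C \<and> Dom C x = Dom C y \<and> Cod C x = Dom C f \<and>
        Cod C y = Dom C g \<and> Comp C f x = Comp C g y \<longrightarrow>
        (\<exists>!h. h \<in> hom C (Dom C x) (Dom C p) \<and> Comp C p h = x \<and> Comp C q h = y))"

definition is_product :: "('o, 'm) cat \<Rightarrow> 'o \<Rightarrow> 'o \<Rightarrow> 'o \<Rightarrow> 'm \<Rightarrow> 'm \<Rightarrow> bool" where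
  "is_product C A B P p1 p2 \<longleftrightarrow>
     P \<in> Obj C \<and> p1 \<in> hom C P A \<and> p2 \<in> hom C P B \<and>
     (\<forall>Z f g. f \<in> hom C Z A \<and> g \<in> hom C Z B \<longrightarrow>
        (\<exists>!h. h \<in> hom C Z P \<and> Comp C p1 h = f \<and> Comp C p2 h = g))"

definition finitely_complete :: "('o, 'm) cat \<Rightarrow> bool" where
  "finitely_complete C \<longleftrightarrow> (\<exists>t. is_terminal C t) \<and>
     (\<forall>f g. f \<in> Arr C \<and> g \<in> Arr C \<and> Cod C f = Cod C g \<longrightarrow>
        (\<exists>p q. is_pullback C f g p q))"

definition is_kernel :: "('o, 'm) cat \<Rightarrow> 'm \<Rightarrow> 'm \<Rightarrow> bool" where
  "is_kernel C k a \<longleftrightarrow> k \<in> Arr C \<and> a \<in> Arr C \<and> Cod C k = Dom C a \<and>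
     zero_arr C (Comp C a k) \<and>
     (\<forall>f. f \<in> Arr C \<and> Cod C f = Dom C a \<and> zero_arr C (Comp C a f) \<longrightarrow>
        (\<exists>!g. g \<in> hom C (Dom C f) (Dom C k) \<and> Comp C k g = f))"

definition split_ext :: "('o, 'm) cat \<Rightarrow> 'm \<Rightarrow> 'm \<Rightarrow> 'm \<Rightarrow> bool" where
  "split_ext C \<kappa> \<alpha> \<beta> \<longleftrightarrow>
     \<alpha> \<in> Arr C \<and> \<beta> \<in> hom C (Cod C \<alpha>) (Dom C \<alpha>) \<and>
     Comp C \<alpha> \<beta> = Id C (Cod C \<alpha>) \<and> is_kernel C \<kappa> \<alpha>"

text \<open>Morphism (v,w) of split extensions with the same kernel whose kernel
  component is the identity.\<close>
definition split_ext_mor ::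
  "('o, 'm) cat \<Rightarrow> 'm \<Rightarrow> 'm \<Rightarrow> 'm \<Rightarrow> 'm \<Rightarrow> 'm \<Rightarrow> 'm \<Rightarrow> 'm \<Rightarrow> 'm \<Rightarrow> bool" where
  "split_ext_mor C \<kappa> \<alpha> \<beta> \<kappa>' \<alpha>' \<beta>' v w \<longleftrightarrow>
     v \<in> hom C (Dom C \<alpha>) (Dom C \<alpha>') \<and> w \<in> hom C (Cod C \<alpha>) (Cod C \<alpha>') \<and>
     Comp C v \<kappa> = \<kappa>' \<and> Comp C \<alpha>' v = Comp C w \<alpha> \<and> Comp C v \<beta> = Comp C \<beta>' w"

text \<open>Generic split extension with kernel X:  X --k--> [X] x| X  with p1 : -> [X], i.\<close>
definition generic_split_ext :: "('o, 'm) cat \<Rightarrow> 'o \<Rightarrow> 'm \<Rightarrow> 'm \<Rightarrow> 'm \<Rightarrow> bool" where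
  "generic_split_ext C X k p i \<longleftrightarrow>
     split_ext C k p i \<and> Dom C k = X \<and>
     (\<forall>\<kappa> \<alpha> \<beta>. split_ext C \<kappa> \<alpha> \<beta> \<and> Dom C \<kappa> = X \<longrightarrow>
        (\<exists>!vw. split_ext_mor C \<kappa> \<alpha> \<beta> k p i (fst vw) (snd vw)))"

text \<open>Protomodularity: the split short five lemma.\<close>
definition protomodular :: "('o, 'm) cat \<Rightarrow> bool" where
  "protomodular C \<longleftrightarrow>
     (\<forall>\<kappa> \<alpha> \<beta> \<kappa>' \<alpha>' \<beta>' u v w.
        split_ext C \<kappa> \<alpha> \<beta> \<and> split_ext C \<kappa>' \<alpha>' \<beta>' \<and>
        u \<in> hom C (Dom C \<kappa>) (Dom C \<kappa>') \<and>
        v \<in> hom C (Dom C \<alpha>) (Dom C \<alpha>') \<and> w \<in> hom C (Cod C \<alpha>) (Cod C \<alpha>') \<and>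
        Comp C v \<kappa> = Comp C \<kappa>' u \<and> Comp C \<alpha>' v = Comp C w \<alpha> \<and>
        Comp C v \<beta> = Comp C \<beta>' w \<and> is_iso C u \<and> is_iso C w \<longrightarrow> is_iso C v)"

text \<open>c is the conjugation morphism c_X : X -> [X] w.r.t. the generic split extension
  (k,p,i): codomain component of the morphism from X --<0,1>--> X x X (pi1, <1,1>).\<close>
definition conjugation :: "('o, 'm) cat \<Rightarrow> 'o \<Rightarrow> 'm \<Rightarrow> 'm \<Rightarrow> 'm \<Rightarrow> 'm \<Rightarrow> bool" where
  "conjugation C X k p i c \<longleftrightarrow>
     (\<exists>P \<pi>1 \<pi>2 d e v. is_product C X X P \<pi>1 \<pi>2 \<and>
        d \<in> hom C X P \<and> zero_arr C (Comp C \<pi>1 d) \<and> Comp C \<pi>2 d = Id C X \<and>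
        e \<in> hom C X P \<and> Comp C \<pi>1 e = Id C X \<and> Comp C \<pi>2 e = Id C X \<and>
        split_ext_mor C d \<pi>1 e k p i v c)"

definition commute :: "('o, 'm) cat \<Rightarrow> 'm \<Rightarrow> 'm \<Rightarrow> bool" where
  "commute C g f \<longleftrightarrow> g \<in> Arr C \<and> f \<in> Arr C \<and> Cod C g = Cod C f \<and>
     (\<exists>P p1 p2 l r \<phi>. is_product C (Dom C g) (Dom C f) P p1 p2 \<and>
        l \<in> hom C (Dom C g) P \<and> Comp C p1 l = Id C (Dom C g) \<and> zero_arr C (Comp C p2 l) \<and>
        r \<in> hom C (Dom C f) P \<and> zero_arr C (Comp C p1 r) \<and> Comp C p2 r = Id C (Dom C f) \<and>
        \<phi> \<in> hom C P (Cod C f) \<and> Comp C \<phi> l = g \<and> Comp C \<phi> r = f)"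

definition is_center :: "('o, 'm) cat \<Rightarrow> 'o \<Rightarrow> 'm \<Rightarrow> bool" where
  "is_center C X z \<longleftrightarrow> z \<in> Arr C \<and> Cod C z = X \<and> commute C z (Id C X) \<and>
     (\<forall>g. g \<in> Arr C \<and> Cod C g = X \<and> commute C g (Id C X) \<longrightarrow>
        (\<exists>!h. h \<in> hom C (Dom C g) (Dom C z) \<and> Comp C z h = g))"

definition trivial_center :: "('o, 'm) cat \<Rightarrow> 'o \<Rightarrow> bool" where
  "trivial_center C X \<longleftrightarrow> (\<exists>z. is_center C X z \<and> is_zero_obj C (Dom C z))"

definition protosplit_mono :: "('o, 'm) cat \<Rightarrow> 'm \<Rightarrow> bool" where
  "protosplit_mono C m \<longleftrightarrow>
     (\<exists>a b. is_kernel C m a \<and> b \<in> hom C (Cod C a) (Dom C a) \<and>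
        Comp C a b = Id C (Cod C a))"

definition strong_complete :: "('o, 'm) cat \<Rightarrow> 'o \<Rightarrow> bool" where
  "strong_complete C Y \<longleftrightarrow> Y \<in> Obj C \<and>
     (\<forall>m. protosplit_mono C m \<and> Dom C m = Y \<longrightarrow>
        (\<exists>!r. r \<in> hom C (Cod C m) Y \<and> Comp C r m = Id C Y))"

definition equiv_rel :: "('o, 'm) cat \<Rightarrow> 'o \<Rightarrow> 'm \<Rightarrow> 'm \<Rightarrow> bool" where
  "equiv_rel C Y r1 r2 \<longleftrightarrow>
     r1 \<in> hom C (Dom C r1) Y \<and> r2 \<in> hom C (Dom C r1) Y \<and>
     (\<forall>x y. x \<in> Arr C \<and> y \<in> Arr C \<and> Cod C x = Dom C r1 \<and> Cod C y = Dom C r1 \<and>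
        Dom C x = Dom C y \<and> Comp C r1 x = Comp C r1 y \<and> Comp C r2 x = Comp C r2 y
        \<longrightarrow> x = y) \<and>
     (\<exists>d \<in> hom C Y (Dom C r1). Comp C r1 d = Id C Y \<and> Comp C r2 d = Id C Y) \<and>
     (\<exists>s \<in> hom C (Dom C r1) (Dom C r1). Comp C r1 s = r2 \<and> Comp C r2 s = r1) \<and>
     (\<forall>p q. is_pullback C r2 r1 p q \<longrightarrow>
        (\<exists>t \<in> hom C (Dom C p) (Dom C r1).
           Comp C r1 t = Comp C r1 p \<and> Comp C r2 t = Comp C r2 q))"

definition bourn_normal :: "('o, 'm) cat \<Rightarrow> 'm \<Rightarrow> bool" where
  "bourn_normal C m \<longleftrightarrow> is_mono C m \<and>
     (\<exists>r1 r2 P \<pi>1 \<pi>2 mt. equiv_rel C (Cod C m) r1 r2 \<and>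
        is_product C (Dom C m) (Dom C m) P \<pi>1 \<pi>2 \<and>
        mt \<in> hom C P (Dom C r1) \<and>
        Comp C r1 mt = Comp C m \<pi>1 \<and> Comp C r2 mt = Comp C m \<pi>2 \<and>
        is_pullback C r1 m mt \<pi>1)"

definition characteristic_mono :: "('o, 'm) cat \<Rightarrow> 'm \<Rightarrow> bool" where
  "characteristic_mono C u \<longleftrightarrow> u \<in> Arr C \<and>
     (\<forall>n. bourn_normal C n \<and> Dom C n = Cod C u \<longrightarrow> bourn_normal C (Comp C n u))"

end

theory Submission
  imports Defs
begin

lemma homI: "f \<in> Arr C \<Longrightarrow> Dom C f = a \<Longrightarrow> Cod C f = b \<Longrightarrow> f \<in> hom C a b"
  by (simp add: hom_def)
lemma homD: "f \<in> hom C a b \<Longrightarrow> f \<in> Arr C" "f \<in> hom C a b \<Longrightarrow> Dom C f = a"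
  "f \<in> hom C a b \<Longrightarrow> Cod C f = b"
  by (simp_all add: hom_def)
lemma hom_iff: "f \<in> hom C a b \<longleftrightarrow> f \<in> Arr C \<and> Dom C f = a \<and> Cod C f = b"
  by (simp add: hom_def)

definition jm :: "('o,'m) cat \<Rightarrow> 'm \<Rightarrow> 'm \<Rightarrow> bool" where
  "jm C r1 r2 \<longleftrightarrow> (\<forall>x y. x \<in> Arr C \<and> y \<in> Arr C \<and> Cod C x = Dom C r1 \<and> Cod C y = Dom C r1 \<and>
        Dom C x = Dom C y \<and> Comp C r1 x = Comp C r1 y \<and> Comp C r2 x = Comp C r2 y
        \<longrightarrow> x = y)"

locale pcat =
  fixes C :: "('o,'m) cat"
  assumes cat: "category C" and pt: "pointed C" and fc: "finitely_complete C"
    and pm: "protomodular C"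
begin

abbreviation cmp (infixr "\<cdot>" 55) where "g \<cdot> f \<equiv> Comp C g f"

lemma dom_obj[simp]: "f \<in> Arr C \<Longrightarrow> Dom C f \<in> Obj C" using cat unfolding category_def by blast
lemma cod_obj[simp]: "f \<in> Arr C \<Longrightarrow> Cod C f \<in> Obj C" using cat unfolding category_def by blast
lemma id_hom: "a \<in> Obj C \<Longrightarrow> Id C a \<in> hom C a a" using cat unfolding category_def by blast
lemma id_arr[simp]: "a \<in> Obj C \<Longrightarrow> Id C a \<in> Arr C" using id_hom homD by metis
lemma Dom_id[simp]: "a \<in> Obj C \<Longrightarrow> Dom C (Id C a) = a" using id_hom homD by metis
lemma Cod_id[simp]: "a \<in> Obj C \<Longrightarrow> Cod C (Id C a) = a" using id_hom homD by metis
lemma comp_hom0: "f \<in> Arr C \<Longrightarrow> g \<in> Arr C \<Longrightarrow> Cod C f = Dom C g \<Longrightarrow> g \<cdot> f \<in> hom C (Dom C f) (Cod C g)"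
  using cat unfolding category_def by blast
lemma comp_arr[simp]: "f \<in> Arr C \<Longrightarrow> g \<in> Arr C \<Longrightarrow> Cod C f = Dom C g \<Longrightarrow> g \<cdot> f \<in> Arr C"
  using comp_hom0 homD by metis
lemma Dom_comp[simp]: "f \<in> Arr C \<Longrightarrow> g \<in> Arr C \<Longrightarrow> Cod C f = Dom C g \<Longrightarrow> Dom C (g \<cdot> f) = Dom C f"
  using comp_hom0 homD by metis
lemma Cod_comp[simp]: "f \<in> Arr C \<Longrightarrow> g \<in> Arr C \<Longrightarrow> Cod C f = Dom C g \<Longrightarrow> Cod C (g \<cdot> f) = Cod C g"
  using comp_hom0 homD by metis
lemma assoc[simp]: "f \<in> Arr C \<Longrightarrow> g \<in> Arr C \<Longrightarrow> h \<in> Arr C \<Longrightarrow> Cod C f = Dom C g \<Longrightarrow> Cod C g = Dom C h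
  \<Longrightarrow> (h \<cdot> g) \<cdot> f = h \<cdot> (g \<cdot> f)"
  using cat unfolding category_def by metis
lemma id_left[simp]: "f \<in> Arr C \<Longrightarrow> Cod C f = b \<Longrightarrow> Id C b \<cdot> f = f"
  using cat unfolding category_def by blast
lemma id_right[simp]: "f \<in> Arr C \<Longrightarrow> Dom C f = a \<Longrightarrow> f \<cdot> Id C a = f"
  using cat unfolding category_def by blast
lemma comp_hom: "f \<in> hom C a b \<Longrightarrow> g \<in> hom C b c \<Longrightarrow> g \<cdot> f \<in> hom C a c"
  by (auto simp: hom_def)
lemma hom_obj: "f \<in> hom C a b \<Longrightarrow> a \<in> Obj C" "f \<in> hom C a b \<Longrightarrow> b \<in> Obj C"
  by (auto simp: hom_def dom_obj cod_obj)

lemma reassoc: "g \<cdot> f = h \<Longrightarrow> f \<in> Arr C \<Longrightarrow> g \<in> Arr C \<Longrightarrow> Cod C f = Dom C g \<Longrightarrow> x \<in> Arr C \<Longrightarrow> Cod C x = Dom C f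
   \<Longrightarrow> g \<cdot> (f \<cdot> x) = h \<cdot> x"
  by (metis assoc)

section \<open>Zero\<close>

definition z0 where "z0 = (SOME z. is_zero_obj C z)"
lemma z0: "is_zero_obj C z0" unfolding z0_def using pt pointed_def someI_ex by metis
lemma z0_obj[simp]: "z0 \<in> Obj C" using z0 unfolding is_zero_obj_def is_initial_def by blast

definition ini where "ini b = (THE f. f \<in> hom C z0 b)"
definition ter where "ter a = (THE f. f \<in> hom C a z0)"

lemma ini_hom: "b \<in> Obj C \<Longrightarrow> ini b \<in> hom C z0 b"
  unfolding ini_def using z0 unfolding is_zero_obj_def is_initial_def by (metis theI')
lemma ini_unique: "f \<in> hom C z0 b \<Longrightarrow> f = ini b"
  using ini_hom hom_obj z0 unfolding is_zero_obj_def is_initial_def by metis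
lemma ter_hom: "a \<in> Obj C \<Longrightarrow> ter a \<in> hom C a z0"
  unfolding ter_def using z0 unfolding is_zero_obj_def is_terminal_def by (metis theI')
lemma ter_unique: "f \<in> hom C a z0 \<Longrightarrow> f = ter a"
  using ter_hom hom_obj z0 unfolding is_zero_obj_def is_terminal_def by metis

lemma ini_simps[simp]: "b \<in> Obj C \<Longrightarrow> ini b \<in> Arr C" "b \<in> Obj C \<Longrightarrow> Dom C (ini b) = z0" "b \<in> Obj C \<Longrightarrow> Cod C (ini b) = b"
  using ini_hom homD by metis+
lemma ter_simps[simp]: "a \<in> Obj C \<Longrightarrow> ter a \<in> Arr C" "a \<in> Obj C \<Longrightarrow> Dom C (ter a) = a" "a \<in> Obj C \<Longrightarrow> Cod C (ter a) = z0"
  using ter_hom homD by metis+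

definition zr where "zr a b = ini b \<cdot> ter a"

lemma zr_hom: "a \<in> Obj C \<Longrightarrow> b \<in> Obj C \<Longrightarrow> zr a b \<in> hom C a b"
  unfolding zr_def using ini_hom ter_hom comp_hom by blast
lemma zr_arr[simp]: "a \<in> Obj C \<Longrightarrow> b \<in> Obj C \<Longrightarrow> zr a b \<in> Arr C" using zr_hom homD by metis
lemma Dom_zr[simp]: "a \<in> Obj C \<Longrightarrow> b \<in> Obj C \<Longrightarrow> Dom C (zr a b) = a" using zr_hom homD by metis
lemma Cod_zr[simp]: "a \<in> Obj C \<Longrightarrow> b \<in> Obj C \<Longrightarrow> Cod C (zr a b) = b" using zr_hom homD by metis

lemma zr_left[simp]: "f \<in> Arr C \<Longrightarrow> Cod C f = b \<Longrightarrow> c \<in> Obj C \<Longrightarrow> zr b c \<cdot> f = zr (Dom C f) c"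
proof -
  assume f: "f \<in> Arr C" "Cod C f = b" "c \<in> Obj C"
  have "zr b c \<cdot> f = ini c \<cdot> (ter b \<cdot> f)" unfolding zr_def
    using f cod_obj[of f] by simp
  also have "ter b \<cdot> f = ter (Dom C f)" apply (rule ter_unique)
    using f ter_hom cod_obj comp_hom homI by metis
  finally show ?thesis unfolding zr_def .
qed

lemma zr_right[simp]: "f \<in> Arr C \<Longrightarrow> Dom C f = b \<Longrightarrow> a \<in> Obj C \<Longrightarrow> f \<cdot> zr a b = zr a (Cod C f)"
proof -
  assume f: "f \<in> Arr C" "Dom C f = b" "a \<in> Obj C"
  have "f \<cdot> zr a b = (f \<cdot> ini b) \<cdot> ter a" unfolding zr_def
    using f dom_obj[of f] by simp
  also have "f \<cdot> ini b = ini (Cod C f)" apply (rule ini_unique)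
    using f ini_hom dom_obj comp_hom homI by metis
  finally show ?thesis unfolding zr_def .
qed

lemma zero_hom_from: "is_zero_obj C z \<Longrightarrow> g \<in> hom C a z \<Longrightarrow> h \<in> hom C z b \<Longrightarrow> h \<cdot> g = zr a b"
proof -
  assume z: "is_zero_obj C z" and g: "g \<in> hom C a z" and h: "h \<in> hom C z b"
  have zo: "z \<in> Obj C" using z unfolding is_zero_obj_def is_initial_def by blast
  have ao: "a \<in> Obj C" and bo: "b \<in> Obj C" using g h hom_obj by auto
  obtain u where u: "u \<in> hom C z z0" using ter_hom zo by blast
  obtain w where w: "w \<in> hom C z0 z" using ini_hom zo by blast
  have wu: "w \<cdot> u = Id C z" using z zo comp_hom[OF u w] id_hom unfolding is_zero_obj_def is_initial_def by metis
  have "h \<cdot> g = h \<cdot> (w \<cdot> u) \<cdot> g" using wu g h by (simp add: hom_iff)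
  also have "\<dots> = (h \<cdot> w) \<cdot> (u \<cdot> g)" using g h u w by (simp add: hom_iff)
  also have "h \<cdot> w = ini b" using ini_unique comp_hom w h by blast
  also have "u \<cdot> g = ter a" using ter_unique comp_hom u g by blast
  finally show ?thesis unfolding zr_def .
qed

lemma zero_arr_iff: "zero_arr C f \<longleftrightarrow> f \<in> Arr C \<and> f = zr (Dom C f) (Cod C f)"
proof
  assume "zero_arr C f" then show "f \<in> Arr C \<and> f = zr (Dom C f) (Cod C f)"
    unfolding zero_arr_def using zero_hom_from by blast
next
  assume f: "f \<in> Arr C \<and> f = zr (Dom C f) (Cod C f)"
  show "zero_arr C f" unfolding zero_arr_def using f z0 ini_hom ter_hom dom_obj cod_obj unfolding zr_def by blast
qed

lemma zero_arrI: "f \<in> hom C a b \<Longrightarrow> f = zr a b \<Longrightarrow> zero_arr C f"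
  using zero_arr_iff homD by metis
lemma zero_arrD: "zero_arr C f \<Longrightarrow> f \<in> hom C a b \<Longrightarrow> f = zr a b"
  using zero_arr_iff homD by metis

lemma from_zero: "is_zero_obj C z \<Longrightarrow> f \<in> hom C z b \<Longrightarrow> f = zr z b"
  using zero_hom_from id_hom hom_obj by (metis homD id_right)
lemma to_zero: "is_zero_obj C z \<Longrightarrow> f \<in> hom C a z \<Longrightarrow> f = zr a z"
  using zero_hom_from id_hom hom_obj by (metis homD id_left)

end

context pcat begin

lemma homE[elim]: "f \<in> hom C a b \<Longrightarrow> (f \<in> Arr C \<Longrightarrow> Dom C f = a \<Longrightarrow> Cod C f = b \<Longrightarrow> P) \<Longrightarrow> P"
  by (simp add: hom_def)

lemma ex1_uniq: "\<exists>!x. P x \<Longrightarrow> P a \<Longrightarrow> P b \<Longrightarrow> a = b" by blast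

section \<open>Monos and isos\<close>

lemma monoI: "f \<in> Arr C \<Longrightarrow> (\<And>W g h. g \<in> hom C W (Dom C f) \<Longrightarrow> h \<in> hom C W (Dom C f) \<Longrightarrow> f \<cdot> g = f \<cdot> h \<Longrightarrow> g = h)
  \<Longrightarrow> is_mono C f"
  unfolding is_mono_def by (metis homI)
lemma monoD: "is_mono C f \<Longrightarrow> g \<in> hom C W (Dom C f) \<Longrightarrow> h \<in> hom C W (Dom C f) \<Longrightarrow> f \<cdot> g = f \<cdot> h \<Longrightarrow> g = h"
  unfolding is_mono_def by (auto simp: hom_def)
lemma mono_arr: "is_mono C f \<Longrightarrow> f \<in> Arr C" unfolding is_mono_def by blast

lemma mono_comp: assumes "is_mono C f" "is_mono C g" "Cod C f = Dom C g" shows "is_mono C (g \<cdot> f)"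
proof -
  have f: "f \<in> Arr C" and g: "g \<in> Arr C" using assms mono_arr by auto
  show ?thesis
  proof (rule monoI)
    show "g \<cdot> f \<in> Arr C" using f g assms by simp
    fix W x y assume x: "x \<in> hom C W (Dom C (g \<cdot> f))" and y: "y \<in> hom C W (Dom C (g \<cdot> f))"
      and e: "(g \<cdot> f) \<cdot> x = (g \<cdot> f) \<cdot> y"
    have "g \<cdot> (f \<cdot> x) = g \<cdot> (f \<cdot> y)" using e x y f g assms by (auto simp: hom_def)
    then have "f \<cdot> x = f \<cdot> y" using monoD[OF assms(2)] x y f g assms by (auto simp: hom_def)
    then show "x = y" using monoD[OF assms(1)] x y f g assms by (auto simp: hom_def)
  qed
qed

lemma mono_cancel: assumes "is_mono C (g \<cdot> f)" "f \<in> Arr C" "g \<in> Arr C" "Cod C f = Dom C g" shows "is_mono C f"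
proof (rule monoI)
  fix W x y assume x: "x \<in> hom C W (Dom C f)" and y: "y \<in> hom C W (Dom C f)" and e: "f \<cdot> x = f \<cdot> y"
  have "(g \<cdot> f) \<cdot> x = (g \<cdot> f) \<cdot> y" using e x y assms by (auto simp: hom_def)
  then show "x = y" using monoD[OF assms(1)] x y assms by (auto simp: hom_def)
qed (rule assms)

lemma isoD: "is_iso C f \<Longrightarrow> \<exists>g \<in> hom C (Cod C f) (Dom C f). g \<cdot> f = Id C (Dom C f) \<and> f \<cdot> g = Id C (Cod C f)"
  unfolding is_iso_def by blast
lemma iso_arr: "is_iso C f \<Longrightarrow> f \<in> Arr C" unfolding is_iso_def by blast
lemma iso_mono: assumes "is_iso C f" shows "is_mono C f"
proof (rule monoI)
  show "f \<in> Arr C" using assms iso_arr by blast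
  obtain g where g: "g \<in> hom C (Cod C f) (Dom C f)" "g \<cdot> f = Id C (Dom C f)" using isoD[OF assms] by blast
  fix W x y assume x: "x \<in> hom C W (Dom C f)" and y: "y \<in> hom C W (Dom C f)" and e: "f \<cdot> x = f \<cdot> y"
  have "(g \<cdot> f) \<cdot> x = (g \<cdot> f) \<cdot> y" using e x y g(1) \<open>f \<in> Arr C\<close> by (auto simp: hom_def)
  moreover have "(g \<cdot> f) \<cdot> x = x" "(g \<cdot> f) \<cdot> y = y" unfolding g(2) using x y by (auto simp: hom_def)
  ultimately show "x = y" by simp
qed
lemma id_iso: "a \<in> Obj C \<Longrightarrow> is_iso C (Id C a)"
  unfolding is_iso_def using id_hom by (intro conjI bexI[of _ "Id C a"]) auto

section \<open>Pullbacks\<close>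

lemma pbD: assumes "is_pullback C f g p q"
  shows "p \<in> hom C (Dom C p) (Dom C f)" "q \<in> hom C (Dom C p) (Dom C g)" "f \<cdot> p = g \<cdot> q"
    "f \<in> Arr C" "g \<in> Arr C" "Cod C f = Cod C g"
proof -
  have "f \<in> Arr C \<and> g \<in> Arr C \<and> Cod C f = Cod C g \<and> p \<in> hom C (Dom C p) (Dom C f) \<and>
     q \<in> hom C (Dom C p) (Dom C g) \<and> f \<cdot> p = g \<cdot> q"
    using assms unfolding is_pullback_def by (elim conjE) (intro conjI; assumption)
  then show "p \<in> hom C (Dom C p) (Dom C f)" "q \<in> hom C (Dom C p) (Dom C g)" "f \<cdot> p = g \<cdot> q"
    "f \<in> Arr C" "g \<in> Arr C" "Cod C f = Cod C g" by simp_all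
qed

lemma pb_univ: assumes "is_pullback C f g p q" "x \<in> Arr C" "y \<in> Arr C" "Dom C x = Dom C y"
  "Cod C x = Dom C f" "Cod C y = Dom C g" "f \<cdot> x = g \<cdot> y"
  shows "\<exists>!h. h \<in> hom C (Dom C x) (Dom C p) \<and> p \<cdot> h = x \<and> q \<cdot> h = y"
proof -
  have H: "\<forall>x y. x \<in> Arr C \<and> y \<in> Arr C \<and> Dom C x = Dom C y \<and> Cod C x = Dom C f \<and>
        Cod C y = Dom C g \<and> f \<cdot> x = g \<cdot> y \<longrightarrow>
        (\<exists>!h. h \<in> hom C (Dom C x) (Dom C p) \<and> p \<cdot> h = x \<and> q \<cdot> h = y)"
    using assms(1) unfolding is_pullback_def by (elim conjE)
  have c: "x \<in> Arr C \<and> y \<in> Arr C \<and> Dom C x = Dom C y \<and> Cod C x = Dom C f \<and>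
        Cod C y = Dom C g \<and> f \<cdot> x = g \<cdot> y" using assms(2-) by (intro conjI)
  show ?thesis using mp[OF spec[OF spec[OF H, of x], of y] c] .
qed

lemma pb_factor: assumes "is_pullback C f g p q" "x \<in> hom C W (Dom C f)" "y \<in> hom C W (Dom C g)" "f \<cdot> x = g \<cdot> y"
  shows "\<exists>h \<in> hom C W (Dom C p). p \<cdot> h = x \<and> q \<cdot> h = y"
proof -
  have u: "\<exists>!h. h \<in> hom C (Dom C x) (Dom C p) \<and> p \<cdot> h = x \<and> q \<cdot> h = y"
    apply (rule pb_univ[OF assms(1)]) using assms(2-) by (simp_all add: hom_def)
  obtain h where h: "h \<in> hom C (Dom C x) (Dom C p)" "p \<cdot> h = x" "q \<cdot> h = y"
    using ex1_implies_ex[OF u] by blast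
  have "Dom C x = W" using assms(2) by (simp add: hom_def)
  then show ?thesis using h by blast
qed

lemma pb_unique: assumes "is_pullback C f g p q" "h \<in> hom C W (Dom C p)" "h' \<in> hom C W (Dom C p)"
   "p \<cdot> h = p \<cdot> h'" "q \<cdot> h = q \<cdot> h'"
  shows "h = h'"
proof -
  note pd = pbD[OF assms(1)]
  have u: "\<exists>!h0. h0 \<in> hom C (Dom C (p \<cdot> h)) (Dom C p) \<and> p \<cdot> h0 = p \<cdot> h \<and> q \<cdot> h0 = q \<cdot> h"
    apply (rule pb_univ[OF assms(1)]) using assms(2) pd by (simp_all add: hom_def reassoc[OF pd(3)])
  have hh: "h \<in> hom C (Dom C (p \<cdot> h)) (Dom C p)" "h' \<in> hom C (Dom C (p \<cdot> h)) (Dom C p)"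
    using assms(2,3) pd by (simp_all add: hom_def)
  show ?thesis by (rule ex1_uniq[OF u]) (use hh assms(4,5) in simp_all)
qed

lemma pbI: assumes "f \<in> hom C A Z" "g \<in> hom C B Z" "p \<in> hom C P A" "q \<in> hom C P B" "f \<cdot> p = g \<cdot> q"
  and ex: "\<And>W x y. x \<in> hom C W A \<Longrightarrow> y \<in> hom C W B \<Longrightarrow> f \<cdot> x = g \<cdot> y \<Longrightarrow> \<exists>h \<in> hom C W P. p \<cdot> h = x \<and> q \<cdot> h = y"
  and un: "\<And>W h h'. h \<in> hom C W P \<Longrightarrow> h' \<in> hom C W P \<Longrightarrow> p \<cdot> h = p \<cdot> h' \<Longrightarrow> q \<cdot> h = q \<cdot> h' \<Longrightarrow> h = h'"
  shows "is_pullback C f g p q"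
  unfolding is_pullback_def
proof (intro conjI allI impI)
  fix x y assume a: "x \<in> Arr C \<and> y \<in> Arr C \<and> Dom C x = Dom C y \<and> Cod C x = Dom C f \<and> Cod C y = Dom C g \<and> f \<cdot> x = g \<cdot> y"
  then have xy: "x \<in> hom C (Dom C x) A" "y \<in> hom C (Dom C x) B" using assms(1-5) by (simp_all add: hom_def)
  obtain h where h: "h \<in> hom C (Dom C x) P" "p \<cdot> h = x" "q \<cdot> h = y" using ex[OF xy] a by blast
  have DP: "Dom C p = P" using assms(3) by (simp add: hom_def)
  show "\<exists>!h. h \<in> hom C (Dom C x) (Dom C p) \<and> p \<cdot> h = x \<and> q \<cdot> h = y"
  proof (rule ex1I[of _ h])
    show "h \<in> hom C (Dom C x) (Dom C p) \<and> p \<cdot> h = x \<and> q \<cdot> h = y" using h DP by simp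
    fix h' assume "h' \<in> hom C (Dom C x) (Dom C p) \<and> p \<cdot> h' = x \<and> q \<cdot> h' = y"
    then show "h' = h" using h DP by (intro un[of h' "Dom C x" h]) simp_all
  qed
qed (use assms(1-5) in \<open>simp_all add: hom_def\<close>)

lemma pb_exists: assumes "f \<in> hom C A Z" "g \<in> hom C B Z"
  shows "\<exists>P p q. is_pullback C f g p q \<and> p \<in> hom C P A \<and> q \<in> hom C P B"
proof -
  have H: "\<forall>f g. f \<in> Arr C \<and> g \<in> Arr C \<and> Cod C f = Cod C g \<longrightarrow> (\<exists>p q. is_pullback C f g p q)"
    using fc unfolding finitely_complete_def by (elim conjE)
  have "f \<in> Arr C \<and> g \<in> Arr C \<and> Cod C f = Cod C g" using assms by (simp add: hom_def)
  then obtain p q where pq: "is_pullback C f g p q" using H by blast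
  have "p \<in> hom C (Dom C p) A" "q \<in> hom C (Dom C p) B" using pbD(1,2)[OF pq] assms by (simp_all add: hom_def)
  then show ?thesis using pq by blast
qed

lemma pb_mono: assumes "is_pullback C f g p q" "is_mono C g" shows "is_mono C p"
proof (rule monoI)
  note pd = pbD[OF assms(1)]
  show "p \<in> Arr C" using pd(1) by (simp add: hom_def)
  fix W x y assume x: "x \<in> hom C W (Dom C p)" and y: "y \<in> hom C W (Dom C p)" and e: "p \<cdot> x = p \<cdot> y"
  have "g \<cdot> (q \<cdot> x) = g \<cdot> (q \<cdot> y)"
    using pd(1,2,4-6) x y e by (simp add: hom_def reassoc[OF pd(3)[symmetric]])
  then have "q \<cdot> x = q \<cdot> y" using monoD[OF assms(2)] x y pd by (auto simp: hom_def)
  then show "x = y" using pb_unique[OF assms(1) x y e] by blast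
qed

section \<open>Products\<close>

lemma prodD: assumes "is_product C A B P p1 p2" shows "P \<in> Obj C" "p1 \<in> hom C P A" "p2 \<in> hom C P B"
proof -
  have "P \<in> Obj C \<and> p1 \<in> hom C P A \<and> p2 \<in> hom C P B"
    using assms unfolding is_product_def by (elim conjE) (intro conjI; assumption)
  then show "P \<in> Obj C" "p1 \<in> hom C P A" "p2 \<in> hom C P B" by simp_all
qed

lemma prod_univ: assumes "is_product C A B P p1 p2" "f \<in> hom C Z A" "g \<in> hom C Z B"
  shows "\<exists>!h. h \<in> hom C Z P \<and> p1 \<cdot> h = f \<and> p2 \<cdot> h = g"
proof -
  have H: "\<forall>Z f g. f \<in> hom C Z A \<and> g \<in> hom C Z B \<longrightarrow>
        (\<exists>!h. h \<in> hom C Z P \<and> p1 \<cdot> h = f \<and> p2 \<cdot> h = g)"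
    using assms(1) unfolding is_product_def by (elim conjE)
  have c: "f \<in> hom C Z A \<and> g \<in> hom C Z B" using assms(2-) by (intro conjI)
  show ?thesis using mp[OF spec[OF spec[OF spec[OF H, of Z], of f], of g] c] .
qed

lemma prod_factor: assumes "is_product C A B P p1 p2" "f \<in> hom C Z A" "g \<in> hom C Z B"
  shows "\<exists>h \<in> hom C Z P. p1 \<cdot> h = f \<and> p2 \<cdot> h = g"
  using ex1_implies_ex[OF prod_univ[OF assms]] by blast

lemma prod_unique: assumes "is_product C A B P p1 p2" "h \<in> hom C Z P" "h' \<in> hom C Z P"
   "p1 \<cdot> h = p1 \<cdot> h'" "p2 \<cdot> h = p2 \<cdot> h'" shows "h = h'"
proof -
  have "p1 \<cdot> h \<in> hom C Z A" "p2 \<cdot> h \<in> hom C Z B" using assms prodD comp_hom by blast+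
  note u = prod_univ[OF assms(1) this]
  show ?thesis by (rule ex1_uniq[OF u]) (use assms(2-5) in simp_all)
qed

lemma pb_terminal_prod: assumes "is_pullback C (ter A) (ter B) p q" "A \<in> Obj C" "B \<in> Obj C"
  shows "is_product C A B (Dom C p) p q"
  unfolding is_product_def
proof (intro conjI allI impI)
  note pd = pbD[OF assms(1)]
  show "Dom C p \<in> Obj C" using pd by auto
  show "p \<in> hom C (Dom C p) A" "q \<in> hom C (Dom C p) B" using pd assms by auto
  fix Z f g assume fg: "f \<in> hom C Z A \<and> g \<in> hom C Z B"
  have "ter A \<cdot> f = ter B \<cdot> g" using fg ter_unique comp_hom ter_hom assms by metis
  then obtain h where h: "h \<in> hom C Z (Dom C p)" "p \<cdot> h = f" "q \<cdot> h = g"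
    using pb_factor[OF assms(1), of f Z g] fg assms by auto
  show "\<exists>!h. h \<in> hom C Z (Dom C p) \<and> p \<cdot> h = f \<and> q \<cdot> h = g"
  proof (rule ex1I[of _ h])
    show "h \<in> hom C Z (Dom C p) \<and> p \<cdot> h = f \<and> q \<cdot> h = g" using h by simp
    fix h' assume "h' \<in> hom C Z (Dom C p) \<and> p \<cdot> h' = f \<and> q \<cdot> h' = g"
    then show "h' = h" using h by (intro pb_unique[OF assms(1), of h' Z h]) simp_all
  qed
qed

lemma prod_exists: assumes "A \<in> Obj C" "B \<in> Obj C" shows "\<exists>P p1 p2. is_product C A B P p1 p2"
proof -
  obtain P p q where "is_pullback C (ter A) (ter B) p q" "p \<in> hom C P A"
    using pb_exists[OF ter_hom[OF assms(1)] ter_hom[OF assms(2)]] by blast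
  then show ?thesis using pb_terminal_prod assms by blast
qed

section \<open>Kernels\<close>

lemma kernel_parts: assumes "is_kernel C k a"
  shows "k \<in> Arr C \<and> a \<in> Arr C \<and> Cod C k = Dom C a \<and> zero_arr C (a \<cdot> k)"
  using assms unfolding is_kernel_def by (elim conjE) (intro conjI; assumption)

lemma kernelD: assumes "is_kernel C k a"
  shows "k \<in> hom C (Dom C k) (Dom C a)" "a \<in> Arr C" "a \<cdot> k = zr (Dom C k) (Cod C a)"
proof -
  note kp = kernel_parts[OF assms]
  show k: "k \<in> hom C (Dom C k) (Dom C a)" using kp by (simp add: hom_def)
  show "a \<in> Arr C" using kp by simp
  have "k \<in> Arr C" "a \<in> Arr C" "Cod C k = Dom C a" "zero_arr C (a \<cdot> k)" using kp by simp_all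
  then show "a \<cdot> k = zr (Dom C k) (Cod C a)" using zero_arrD[of "a \<cdot> k" "Dom C k" "Cod C a"] comp_hom0 by simp
qed

lemma kernel_univ: assumes "is_kernel C k a" "f \<in> Arr C" "Cod C f = Dom C a" "zero_arr C (a \<cdot> f)"
  shows "\<exists>!g. g \<in> hom C (Dom C f) (Dom C k) \<and> k \<cdot> g = f"
proof -
  have H: "\<forall>f. f \<in> Arr C \<and> Cod C f = Dom C a \<and> zero_arr C (a \<cdot> f) \<longrightarrow>
        (\<exists>!g. g \<in> hom C (Dom C f) (Dom C k) \<and> k \<cdot> g = f)"
    using assms(1) unfolding is_kernel_def by (elim conjE)
  have c: "f \<in> Arr C \<and> Cod C f = Dom C a \<and> zero_arr C (a \<cdot> f)" using assms(2-) by (intro conjI)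
  show ?thesis using mp[OF spec[OF H, of f] c] .
qed

lemma kernel_factor: assumes "is_kernel C k a" "f \<in> hom C W (Dom C a)" "a \<cdot> f = zr W (Cod C a)"
  shows "\<exists>g \<in> hom C W (Dom C k). k \<cdot> g = f"
proof -
  note kd = kernelD[OF assms(1)]
  have W: "W \<in> Obj C" using assms(2) hom_obj by blast
  have "zero_arr C (a \<cdot> f)" apply (rule zero_arrI[of _ W "Cod C a"]) using assms(2,3) kd W by (auto simp: hom_def)
  then have u: "\<exists>!g. g \<in> hom C (Dom C f) (Dom C k) \<and> k \<cdot> g = f"
    by (intro kernel_univ[OF assms(1)]) (use assms(2) in \<open>simp_all add: hom_def\<close>)
  have "Dom C f = W" using assms(2) by (simp add: hom_def)
  then show ?thesis using ex1_implies_ex[OF u] by blast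
qed

lemma kernel_mono: assumes "is_kernel C k a" shows "is_mono C k"
proof (rule monoI)
  note kd = kernelD[OF assms]
  show "k \<in> Arr C" using kd by (simp add: hom_def)
  fix W g h assume g: "g \<in> hom C W (Dom C k)" and h: "h \<in> hom C W (Dom C k)" and e: "k \<cdot> g = k \<cdot> h"
  have W: "W \<in> Obj C" using g hom_obj by blast
  have z: "zero_arr C (a \<cdot> (k \<cdot> g))"
    apply (rule zero_arrI[of _ W "Cod C a"]) using kd g W by (auto simp: hom_def reassoc[OF kd(3)])
  have u: "\<exists>!g0. g0 \<in> hom C (Dom C (k \<cdot> g)) (Dom C k) \<and> k \<cdot> g0 = k \<cdot> g"
    apply (rule kernel_univ[OF assms _ _ z]) using kd g by (simp_all add: hom_def)
  show "g = h" apply (rule ex1_uniq[OF u]) using g h e kd by (simp_all add: hom_def)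
qed

lemma kernelI: assumes "k \<in> hom C K A" "a \<in> hom C A B" "a \<cdot> k = zr K B"
  and ex: "\<And>W f. f \<in> hom C W A \<Longrightarrow> a \<cdot> f = zr W B \<Longrightarrow> \<exists>g \<in> hom C W K. k \<cdot> g = f"
  and un: "\<And>W g h. g \<in> hom C W K \<Longrightarrow> h \<in> hom C W K \<Longrightarrow> k \<cdot> g = k \<cdot> h \<Longrightarrow> g = h"
  shows "is_kernel C k a"
  unfolding is_kernel_def
proof (intro conjI allI impI)
  show "zero_arr C (a \<cdot> k)" using assms(1-3) by (intro zero_arrI comp_hom) simp_all
  fix f assume f: "f \<in> Arr C \<and> Cod C f = Dom C a \<and> zero_arr C (a \<cdot> f)"
  then have fh: "f \<in> hom C (Dom C f) A" using assms(1-3) by (simp add: hom_def)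
  have "a \<cdot> f = zr (Dom C f) B" using f zero_arrD comp_hom[OF fh assms(2)] by blast
  then obtain g where g: "g \<in> hom C (Dom C f) K" "k \<cdot> g = f" using ex fh by blast
  have DK: "Dom C k = K" using assms(1) by (simp add: hom_def)
  show "\<exists>!g. g \<in> hom C (Dom C f) (Dom C k) \<and> k \<cdot> g = f"
  proof (rule ex1I[of _ g])
    show "g \<in> hom C (Dom C f) (Dom C k) \<and> k \<cdot> g = f" using g DK by simp
    fix h assume "h \<in> hom C (Dom C f) (Dom C k) \<and> k \<cdot> h = f"
    then show "h = g" using g DK by (intro un[of h "Dom C f" g]) simp_all
  qed
qed (use assms(1-3) in \<open>simp_all add: hom_def\<close>)

lemma kernel_exists: assumes "a \<in> hom C A B" shows "\<exists>K k. k \<in> hom C K A \<and> is_kernel C k a"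
proof -
  have B: "B \<in> Obj C" and A: "A \<in> Obj C" using assms hom_obj by auto
  obtain K k t where pb: "is_pullback C a (ini B) k t" "k \<in> hom C K A" "t \<in> hom C K z0"
    using pb_exists[OF assms ini_hom[OF B]] by blast
  note pd = pbD[OF pb(1)]
  have K: "K \<in> Obj C" using pb hom_obj by blast
  have "is_kernel C k a"
  proof (rule kernelI[OF pb(2) assms])
    have "a \<cdot> k = ini B \<cdot> t" using pd by simp
    also have "\<dots> = zr K B" by (rule zero_hom_from[OF z0 pb(3) ini_hom[OF B]])
    finally show "a \<cdot> k = zr K B" .
  next
    fix W f assume f: "f \<in> hom C W A" "a \<cdot> f = zr W B"
    have W: "W \<in> Obj C" using f hom_obj by blast
    have e: "a \<cdot> f = ini B \<cdot> ter W" using f unfolding zr_def by simp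
    have "f \<in> hom C W (Dom C a)" "ter W \<in> hom C W (Dom C (ini B))" using f assms ter_hom[OF W] ini_hom[OF B]
      by (auto simp: hom_def)
    from pb_factor[OF pb(1) this e] obtain h where "h \<in> hom C W (Dom C k)" "k \<cdot> h = f" by blast
    then show "\<exists>g\<in>hom C W K. k \<cdot> g = f" using pb(2) by (auto simp: hom_def)
  next
    fix W g h assume g: "g \<in> hom C W K" and h: "h \<in> hom C W K" and e: "k \<cdot> g = k \<cdot> h"
    have "t \<cdot> g = ter W" "t \<cdot> h = ter W" using g h pb(3) ter_unique comp_hom by blast+
    then have "t \<cdot> g = t \<cdot> h" by simp
    moreover have "g \<in> hom C W (Dom C k)" "h \<in> hom C W (Dom C k)" using g h pb(2) by (auto simp: hom_def)
    ultimately show "g = h" using pb_unique[OF pb(1)] e by blast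
  qed
  then show ?thesis using pb by blast
qed

end

context pcat begin

section \<open>Split extensions\<close>

lemma split_parts: assumes "split_ext C \<kappa> \<alpha> \<beta>"
  shows "\<alpha> \<in> hom C (Dom C \<alpha>) (Cod C \<alpha>)" "\<beta> \<in> hom C (Cod C \<alpha>) (Dom C \<alpha>)" "\<alpha> \<cdot> \<beta> = Id C (Cod C \<alpha>)"
    "is_kernel C \<kappa> \<alpha>" "\<kappa> \<in> hom C (Dom C \<kappa>) (Dom C \<alpha>)" "\<alpha> \<cdot> \<kappa> = zr (Dom C \<kappa>) (Cod C \<alpha>)"
proof -
  show a: "\<alpha> \<in> hom C (Dom C \<alpha>) (Cod C \<alpha>)" using assms unfolding split_ext_def by (simp add: hom_def)
  show "\<beta> \<in> hom C (Cod C \<alpha>) (Dom C \<alpha>)" "\<alpha> \<cdot> \<beta> = Id C (Cod C \<alpha>)" "is_kernel C \<kappa> \<alpha>"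
    using assms unfolding split_ext_def by simp_all
  then show "\<kappa> \<in> hom C (Dom C \<kappa>) (Dom C \<alpha>)" "\<alpha> \<cdot> \<kappa> = zr (Dom C \<kappa>) (Cod C \<alpha>)" using kernelD by blast+
qed

lemma splitI: "\<alpha> \<in> hom C A B \<Longrightarrow> \<beta> \<in> hom C B A \<Longrightarrow> \<alpha> \<cdot> \<beta> = Id C B \<Longrightarrow> is_kernel C \<kappa> \<alpha> \<Longrightarrow> split_ext C \<kappa> \<alpha> \<beta>"
  unfolding split_ext_def by (auto simp: hom_def)

lemma morD: assumes "split_ext_mor C \<kappa> \<alpha> \<beta> \<kappa>' \<alpha>' \<beta>' v w"
  shows "v \<in> hom C (Dom C \<alpha>) (Dom C \<alpha>')" "w \<in> hom C (Cod C \<alpha>) (Cod C \<alpha>')" "v \<cdot> \<kappa> = \<kappa>'"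
    "\<alpha>' \<cdot> v = w \<cdot> \<alpha>" "v \<cdot> \<beta> = \<beta>' \<cdot> w"
  using assms unfolding split_ext_mor_def by simp_all

lemma morI: "v \<in> hom C (Dom C \<alpha>) (Dom C \<alpha>') \<Longrightarrow> w \<in> hom C (Cod C \<alpha>) (Cod C \<alpha>') \<Longrightarrow> v \<cdot> \<kappa> = \<kappa>' \<Longrightarrow>
    \<alpha>' \<cdot> v = w \<cdot> \<alpha> \<Longrightarrow> v \<cdot> \<beta> = \<beta>' \<cdot> w \<Longrightarrow> split_ext_mor C \<kappa> \<alpha> \<beta> \<kappa>' \<alpha>' \<beta>' v w"
  unfolding split_ext_mor_def by simp

lemma mor_comp: assumes s1: "split_ext C \<kappa> \<alpha> \<beta>" and s2: "split_ext C \<kappa>' \<alpha>' \<beta>'" and s3: "split_ext C \<kappa>'' \<alpha>'' \<beta>''"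
  and m1: "split_ext_mor C \<kappa> \<alpha> \<beta> \<kappa>' \<alpha>' \<beta>' v w" and m2: "split_ext_mor C \<kappa>' \<alpha>' \<beta>' \<kappa>'' \<alpha>'' \<beta>'' v' w'"
  shows "split_ext_mor C \<kappa> \<alpha> \<beta> \<kappa>'' \<alpha>'' \<beta>'' (v' \<cdot> v) (w' \<cdot> w)"
proof -
  note a1 = split_parts[OF s1] and a2 = split_parts[OF s2] and a3 = split_parts[OF s3]
  note b1 = morD[OF m1] and b2 = morD[OF m2]
  have X: "Dom C \<kappa>' = Dom C \<kappa>" using b1(3) a1(5) b1(1) by (auto simp: hom_def)
  show ?thesis
  proof (rule morI)
    show "v' \<cdot> v \<in> hom C (Dom C \<alpha>) (Dom C \<alpha>'')" using b1(1) b2(1) comp_hom by blast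
    show "w' \<cdot> w \<in> hom C (Cod C \<alpha>) (Cod C \<alpha>'')" using b1(2) b2(2) comp_hom by blast
    show "(v' \<cdot> v) \<cdot> \<kappa> = \<kappa>''" using a1 a2 a3 b1 b2 by (auto simp: hom_def)
    show "\<alpha>'' \<cdot> v' \<cdot> v = (w' \<cdot> w) \<cdot> \<alpha>" using a1 a2 a3 b1 b2 by (auto simp: hom_def reassoc[OF b2(4)])
    show "(v' \<cdot> v) \<cdot> \<beta> = \<beta>'' \<cdot> w' \<cdot> w" using a1 a2 a3 b1 b2 by (auto simp: hom_def reassoc[OF b2(5)])
  qed
qed

lemma mor_id: assumes "split_ext C \<kappa> \<alpha> \<beta>"
  shows "split_ext_mor C \<kappa> \<alpha> \<beta> \<kappa> \<alpha> \<beta> (Id C (Dom C \<alpha>)) (Id C (Cod C \<alpha>))"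
  using split_parts[OF assms] by (intro morI) (auto simp: hom_def intro: id_hom)

lemma gen_parts: assumes "generic_split_ext C X k p i"
  shows "split_ext C k p i" "Dom C k = X"
  using assms unfolding generic_split_ext_def by simp_all

lemma gen_univ: assumes "generic_split_ext C X k p i" "split_ext C \<kappa> \<alpha> \<beta>" "Dom C \<kappa> = X"
  shows "\<exists>!vw. split_ext_mor C \<kappa> \<alpha> \<beta> k p i (fst vw) (snd vw)"
proof -
  have H: "\<forall>\<kappa> \<alpha> \<beta>. split_ext C \<kappa> \<alpha> \<beta> \<and> Dom C \<kappa> = X \<longrightarrow>
        (\<exists>!vw. split_ext_mor C \<kappa> \<alpha> \<beta> k p i (fst vw) (snd vw))"
    using assms(1) unfolding generic_split_ext_def by (elim conjE)
  have c: "split_ext C \<kappa> \<alpha> \<beta> \<and> Dom C \<kappa> = X" using assms(2,3) by (intro conjI)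
  show ?thesis using mp[OF spec[OF spec[OF spec[OF H, of \<kappa>], of \<alpha>], of \<beta>] c] .
qed

lemma gen_exists: assumes "generic_split_ext C X k p i" "split_ext C \<kappa> \<alpha> \<beta>" "Dom C \<kappa> = X"
  shows "\<exists>v w. split_ext_mor C \<kappa> \<alpha> \<beta> k p i v w"
  using ex1_implies_ex[OF gen_univ[OF assms]] by blast

lemma gen_unique: assumes "generic_split_ext C X k p i" "split_ext C \<kappa> \<alpha> \<beta>" "Dom C \<kappa> = X"
  "split_ext_mor C \<kappa> \<alpha> \<beta> k p i v1 w1" "split_ext_mor C \<kappa> \<alpha> \<beta> k p i v2 w2"
  shows "v1 = v2" "w1 = w2"
proof -
  have "(v1, w1) = (v2, w2)" by (rule ex1_uniq[OF gen_univ[OF assms(1-3)]]) (use assms(4,5) in simp_all)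
  then show "v1 = v2" "w1 = w2" by simp_all
qed

lemma protoD: assumes "split_ext C \<kappa> \<alpha> \<beta>" "split_ext C \<kappa>' \<alpha>' \<beta>'"
  "u \<in> hom C (Dom C \<kappa>) (Dom C \<kappa>')" "v \<in> hom C (Dom C \<alpha>) (Dom C \<alpha>')" "w \<in> hom C (Cod C \<alpha>) (Cod C \<alpha>')"
  "v \<cdot> \<kappa> = \<kappa>' \<cdot> u" "\<alpha>' \<cdot> v = w \<cdot> \<alpha>" "v \<cdot> \<beta> = \<beta>' \<cdot> w" "is_iso C u" "is_iso C w"
  shows "is_iso C v"
proof -
  have H: "\<forall>\<kappa> \<alpha> \<beta> \<kappa>' \<alpha>' \<beta>' u v w.
        split_ext C \<kappa> \<alpha> \<beta> \<and> split_ext C \<kappa>' \<alpha>' \<beta>' \<and>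
        u \<in> hom C (Dom C \<kappa>) (Dom C \<kappa>') \<and>
        v \<in> hom C (Dom C \<alpha>) (Dom C \<alpha>') \<and> w \<in> hom C (Cod C \<alpha>) (Cod C \<alpha>') \<and>
        v \<cdot> \<kappa> = \<kappa>' \<cdot> u \<and> \<alpha>' \<cdot> v = w \<cdot> \<alpha> \<and>
        v \<cdot> \<beta> = \<beta>' \<cdot> w \<and> is_iso C u \<and> is_iso C w \<longrightarrow> is_iso C v"
    using pm unfolding protomodular_def .
  have c: "split_ext C \<kappa> \<alpha> \<beta> \<and> split_ext C \<kappa>' \<alpha>' \<beta>' \<and>
        u \<in> hom C (Dom C \<kappa>) (Dom C \<kappa>') \<and>
        v \<in> hom C (Dom C \<alpha>) (Dom C \<alpha>') \<and> w \<in> hom C (Cod C \<alpha>) (Cod C \<alpha>') \<and>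
        v \<cdot> \<kappa> = \<kappa>' \<cdot> u \<and> \<alpha>' \<cdot> v = w \<cdot> \<alpha> \<and>
        v \<cdot> \<beta> = \<beta>' \<cdot> w \<and> is_iso C u \<and> is_iso C w" using assms by (intro conjI)
  show ?thesis using H c by blast
qed

lemma prod_kernel: assumes P: "is_product C A B P p1 p2" and r: "r \<in> hom C B P" "p1 \<cdot> r = zr B A" "p2 \<cdot> r = Id C B"
  shows "is_kernel C r p1"
proof -
  note pd = prodD[OF P]
  have AB: "A \<in> Obj C" "B \<in> Obj C" using pd hom_obj by blast+
  show ?thesis
  proof (rule kernelI[OF r(1) pd(2) r(2)])
    fix W f assume f: "f \<in> hom C W P" "p1 \<cdot> f = zr W A"
    have W: "W \<in> Obj C" using f hom_obj by blast
    have g: "p2 \<cdot> f \<in> hom C W B" using f pd comp_hom by blast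
    have "r \<cdot> (p2 \<cdot> f) = f"
    proof (rule prod_unique[OF P])
      show "r \<cdot> (p2 \<cdot> f) \<in> hom C W P" using g r comp_hom by blast
      show "f \<in> hom C W P" by fact
      show "p1 \<cdot> (r \<cdot> (p2 \<cdot> f)) = p1 \<cdot> f" using f g r pd AB W by (auto simp: hom_def reassoc[OF r(2)])
      show "p2 \<cdot> (r \<cdot> (p2 \<cdot> f)) = p2 \<cdot> f" using f g r pd AB W by (auto simp: hom_def reassoc[OF r(3)])
    qed
    then show "\<exists>g\<in>hom C W B. r \<cdot> g = f" using g by blast
  next
    fix W g h assume g: "g \<in> hom C W B" and h: "h \<in> hom C W B" and e: "r \<cdot> g = r \<cdot> h"
    have "p2 \<cdot> (r \<cdot> g) = p2 \<cdot> (r \<cdot> h)" using e by simp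
    then show "g = h" using g h r pd by (auto simp: hom_def reassoc[OF r(3)])
  qed
qed

lemma prod_split: assumes P: "is_product C A B P p1 p2" and r: "r \<in> hom C B P" "p1 \<cdot> r = zr B A" "p2 \<cdot> r = Id C B"
  and l: "l \<in> hom C A P" "p1 \<cdot> l = Id C A"
  shows "split_ext C r p1 l"
  by (rule splitI[OF prodD(2)[OF P] l(1) l(2) prod_kernel[OF assms(1-4)]])

end

context pcat begin

lemma iso_inv: assumes "is_iso C f" obtains j where "j \<in> hom C (Cod C f) (Dom C f)" "j \<cdot> f = Id C (Dom C f)" "f \<cdot> j = Id C (Cod C f)"
  using isoD[OF assms] by blast

lemma split_factor:
  assumes s: "split_ext C \<kappa> \<alpha> \<beta>" and mu: "is_mono C \<mu>" "\<mu> \<in> hom C M T" and f: "f \<in> hom C (Dom C \<alpha>) T"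
    and a: "a \<in> hom C (Dom C \<kappa>) M" "\<mu> \<cdot> a = f \<cdot> \<kappa>" and b: "b \<in> hom C (Cod C \<alpha>) M" "\<mu> \<cdot> b = f \<cdot> \<beta>"
  shows "\<exists>h \<in> hom C (Dom C \<alpha>) M. \<mu> \<cdot> h = f"
proof -
  note sp = split_parts[OF s]
  define A where "A = Dom C \<alpha>"
  define B where "B = Cod C \<alpha>"
  define X where "X = Dom C \<kappa>"
  note defs = A_def[symmetric] B_def[symmetric] X_def[symmetric]
  have AB: "A \<in> Obj C" "B \<in> Obj C" "X \<in> Obj C" "T \<in> Obj C" "M \<in> Obj C"
    using sp mu f hom_obj unfolding defs by blast+
  obtain E e1 e2 where pb: "is_pullback C f \<mu> e1 e2" "e1 \<in> hom C E A" "e2 \<in> hom C E M"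
    using pb_exists[OF f mu(2)] unfolding defs by blast
  note pd = pbD[OF pb(1)]
  have e1m: "is_mono C e1" using pb_mono[OF pb(1) mu(1)] .
  have "\<exists>h\<in>hom C X (Dom C e1). e1 \<cdot> h = \<kappa> \<and> e2 \<cdot> h = a"
    apply (rule pb_factor[OF pb(1)]) using sp a f mu pb unfolding defs by (auto simp: hom_def)
  then obtain \<kappa>' where k': "\<kappa>' \<in> hom C X E" "e1 \<cdot> \<kappa>' = \<kappa>" "e2 \<cdot> \<kappa>' = a" using pb by (auto simp: hom_def)
  have "\<exists>h\<in>hom C B (Dom C e1). e1 \<cdot> h = \<beta> \<and> e2 \<cdot> h = b"
    apply (rule pb_factor[OF pb(1)]) using sp b f mu pb unfolding defs by (auto simp: hom_def)
  then obtain \<beta>' where b': "\<beta>' \<in> hom C B E" "e1 \<cdot> \<beta>' = \<beta>" "e2 \<cdot> \<beta>' = b" using pb by (auto simp: hom_def)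
  have ah: "\<alpha> \<cdot> e1 \<in> hom C E B" using sp pb comp_hom unfolding defs by blast
  have s': "split_ext C \<kappa>' (\<alpha> \<cdot> e1) \<beta>'"
  proof (rule splitI[OF ah b'(1)])
    show "(\<alpha> \<cdot> e1) \<cdot> \<beta>' = Id C B" using sp pb b' unfolding defs by (auto simp: hom_def)
    show "is_kernel C \<kappa>' (\<alpha> \<cdot> e1)"
    proof (rule kernelI[OF k'(1) ah])
      show "(\<alpha> \<cdot> e1) \<cdot> \<kappa>' = zr X B" using sp pb k' unfolding defs by (auto simp: hom_def)
    next
      fix W g assume g: "g \<in> hom C W E" "(\<alpha> \<cdot> e1) \<cdot> g = zr W B"
      have "\<alpha> \<cdot> (e1 \<cdot> g) = zr W (Cod C \<alpha>)" using g sp pb unfolding defs by (auto simp: hom_def)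
      moreover have "e1 \<cdot> g \<in> hom C W (Dom C \<alpha>)" using g pb comp_hom unfolding defs by blast
      ultimately obtain x where x: "x \<in> hom C W X" "\<kappa> \<cdot> x = e1 \<cdot> g" using kernel_factor[OF sp(4)] unfolding defs by blast
      have "e1 \<cdot> (\<kappa>' \<cdot> x) = e1 \<cdot> g" using x k' pb by (auto simp: hom_def reassoc[OF k'(2)])
      then have "\<kappa>' \<cdot> x = g" using monoD[OF e1m, of "\<kappa>' \<cdot> x" W g] x k' g pb by (auto simp: hom_def)
      then show "\<exists>x\<in>hom C W X. \<kappa>' \<cdot> x = g" using x by blast
    next
      fix W g h assume g: "g \<in> hom C W X" and h: "h \<in> hom C W X" and e: "\<kappa>' \<cdot> g = \<kappa>' \<cdot> h"
      have "e1 \<cdot> (\<kappa>' \<cdot> g) = e1 \<cdot> (\<kappa>' \<cdot> h)" using e by simp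
      then have "\<kappa> \<cdot> g = \<kappa> \<cdot> h" using g h k' pb by (auto simp: hom_def reassoc[OF k'(2)])
      then show "g = h" using monoD[OF kernel_mono[OF sp(4)]] g h unfolding defs by blast
    qed
  qed
  have iso: "is_iso C e1"
  proof (rule protoD[OF s' s, of "Id C X" e1 "Id C B"])
    show "Id C X \<in> hom C (Dom C \<kappa>') (Dom C \<kappa>)" using k'(1) AB id_hom unfolding defs by (auto simp: hom_def)
    show "e1 \<in> hom C (Dom C (\<alpha> \<cdot> e1)) (Dom C \<alpha>)" using pb sp unfolding defs by (auto simp: hom_def)
    show "Id C B \<in> hom C (Cod C (\<alpha> \<cdot> e1)) (Cod C \<alpha>)" using pb sp AB id_hom unfolding defs by (auto simp: hom_def)
    show "e1 \<cdot> \<kappa>' = \<kappa> \<cdot> Id C X" using k' sp unfolding defs by (auto simp: hom_def)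
    show "\<alpha> \<cdot> e1 = Id C B \<cdot> \<alpha> \<cdot> e1" using pb sp unfolding defs by (auto simp: hom_def)
    show "e1 \<cdot> \<beta>' = \<beta> \<cdot> Id C B" using b' sp unfolding defs by (auto simp: hom_def)
    show "is_iso C (Id C X)" "is_iso C (Id C B)" using AB id_iso by auto
  qed
  obtain j where j: "j \<in> hom C A E" "j \<cdot> e1 = Id C E" "e1 \<cdot> j = Id C A"
    using iso_inv[OF iso] pb by (auto simp: hom_def)
  have "\<mu> \<cdot> (e2 \<cdot> j) = f"
    using j pb pd(4-6) f mu unfolding defs by (auto simp: hom_def reassoc[OF pd(3)[symmetric]])
  moreover have "e2 \<cdot> j \<in> hom C A M" using j pb comp_hom by blast
  ultimately show ?thesis unfolding defs by blast
qed

lemma split_epi: assumes s: "split_ext C \<kappa> \<alpha> \<beta>" and f: "f \<in> hom C (Dom C \<alpha>) T" and g: "g \<in> hom C (Dom C \<alpha>) T"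
  and e1: "f \<cdot> \<kappa> = g \<cdot> \<kappa>" and e2: "f \<cdot> \<beta> = g \<cdot> \<beta>"
  shows "f = g"
proof -
  note sp = split_parts[OF s]
  have T: "T \<in> Obj C" using f hom_obj by blast
  obtain Q t1 t2 where Q: "is_product C T T Q t1 t2" using prod_exists[OF T T] by blast
  note qd = prodD[OF Q]
  obtain fg where fg: "fg \<in> hom C (Dom C \<alpha>) Q" "t1 \<cdot> fg = f" "t2 \<cdot> fg = g" using prod_factor[OF Q f g] by blast
  obtain dl where dl: "dl \<in> hom C T Q" "t1 \<cdot> dl = Id C T" "t2 \<cdot> dl = Id C T" using prod_factor[OF Q id_hom[OF T] id_hom[OF T]] by blast
  have dm: "is_mono C dl" apply (rule mono_cancel[where f=dl and g=t1]) using dl qd iso_mono[OF id_iso[OF T]] by (auto simp: hom_def)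
  have "\<exists>h \<in> hom C (Dom C \<alpha>) T. dl \<cdot> h = fg"
  proof (rule split_factor[OF s dm dl(1) fg(1)])
    show "f \<cdot> \<kappa> \<in> hom C (Dom C \<kappa>) T" "f \<cdot> \<beta> \<in> hom C (Cod C \<alpha>) T" using f sp comp_hom by blast+
    have hs: "dl \<in> Arr C" "Dom C dl = T" "Cod C dl = Q" "fg \<in> Arr C" "Dom C fg = Dom C \<alpha>" "Cod C fg = Q"
      "t1 \<in> Arr C" "Dom C t1 = Q" "Cod C t1 = T" "t2 \<in> Arr C" "Dom C t2 = Q" "Cod C t2 = T"
      "f \<in> Arr C" "Dom C f = Dom C \<alpha>" "Cod C f = T" "\<kappa> \<in> Arr C" "Cod C \<kappa> = Dom C \<alpha>" "\<beta> \<in> Arr C" "Cod C \<beta> = Dom C \<alpha>"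
      "Dom C \<beta> = Cod C \<alpha>" "g \<in> Arr C" "Dom C g = Dom C \<alpha>" "Cod C g = T"
      using dl fg qd f g sp by (auto simp: hom_def)
    show "dl \<cdot> f \<cdot> \<kappa> = fg \<cdot> \<kappa>"
      apply (rule prod_unique[OF Q, of _ "Dom C \<kappa>"])
      using hs e1 by (simp_all add: hom_def reassoc[OF dl(2)] reassoc[OF dl(3)] reassoc[OF fg(2)] reassoc[OF fg(3)])
    show "dl \<cdot> f \<cdot> \<beta> = fg \<cdot> \<beta>"
      apply (rule prod_unique[OF Q, of _ "Cod C \<alpha>"])
      using hs e2 by (simp_all add: hom_def reassoc[OF dl(2)] reassoc[OF dl(3)] reassoc[OF fg(2)] reassoc[OF fg(3)])
  qed
  then obtain h where h: "h \<in> hom C (Dom C \<alpha>) T" "dl \<cdot> h = fg" by blast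
  have "t1 \<cdot> (dl \<cdot> h) = h" "t2 \<cdot> (dl \<cdot> h) = h" using h dl qd by (auto simp: hom_def reassoc[OF dl(2)] reassoc[OF dl(3)] simp del: assoc)
  then show ?thesis using h fg by simp
qed

end

context pcat begin

lemma mor_pullback: assumes s: "split_ext C \<kappa> \<alpha> \<beta>" and s': "split_ext C \<kappa>' \<alpha>' \<beta>'"
  and X: "Dom C \<kappa> = Dom C \<kappa>'" and m: "split_ext_mor C \<kappa> \<alpha> \<beta> \<kappa>' \<alpha>' \<beta>' v w"
  shows "is_pullback C \<alpha>' w v \<alpha>"
proof -
  note sp = split_parts[OF s] and sp' = split_parts[OF s'] and md = morD[OF m]
  define A where "A = Dom C \<alpha>"
  define B where "B = Cod C \<alpha>"
  define A' where "A' = Dom C \<alpha>'"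
  define B' where "B' = Cod C \<alpha>'"
  define Y where "Y = Dom C \<kappa>"
  note defs = A_def[symmetric] B_def[symmetric] A'_def[symmetric] B'_def[symmetric] Y_def[symmetric]
  have ob: "A \<in> Obj C" "B \<in> Obj C" "A' \<in> Obj C" "B' \<in> Obj C" "Y \<in> Obj C"
    using sp sp' hom_obj unfolding defs by blast+
  note hs0 = homD[OF sp(1)] homD[OF sp(2)] homD[OF sp(5)] homD[OF sp'(1)] homD[OF sp'(2)] homD[OF sp'(5)]
    homD[OF md(1)] homD[OF md(2)]
  note hs = hs0[unfolded defs X[symmetric]] defs X[symmetric, unfolded defs]
  have a'h: "\<alpha>' \<in> hom C A' B'" and wh: "w \<in> hom C B B'" and vh: "v \<in> hom C A A'" and ah: "\<alpha> \<in> hom C A B"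
    using hs by (simp_all add: hom_def)
  obtain P a b where pb: "is_pullback C \<alpha>' w a b" "a \<in> hom C P A'" "b \<in> hom C P B"
    using pb_exists[OF a'h wh] by blast
  note pd = pbD[OF pb(1)]
  note hp = homD[OF pb(2)] homD[OF pb(3)]
  have P: "P \<in> Obj C" using pb hom_obj by blast
  have DA: "Dom C a = P" "Dom C b = P" using hp by simp_all
  have k'h: "\<kappa>' \<in> hom C Y A'" using hs by (simp add: hom_def)
  have e1: "\<alpha>' \<cdot> \<kappa>' = w \<cdot> zr Y B"
    using sp'(6) hs ob unfolding defs X[symmetric] by (simp add: hom_def)
  obtain kP where kP: "kP \<in> hom C Y P" "a \<cdot> kP = \<kappa>'" "b \<cdot> kP = zr Y B"
    using pb_factor[OF pb(1) _ _ e1, of Y] k'h zr_hom[OF ob(5) ob(2)] a'h wh DA by (auto simp: hom_def)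
  have bwh: "\<beta>' \<cdot> w \<in> hom C B A'" using hs comp_hom by (auto simp: hom_def)
  have e2: "\<alpha>' \<cdot> (\<beta>' \<cdot> w) = w \<cdot> Id C B"
    using hs ob by (simp add: reassoc[OF sp'(3)])
  obtain bP where bP: "bP \<in> hom C B P" "a \<cdot> bP = \<beta>' \<cdot> w" "b \<cdot> bP = Id C B"
    using pb_factor[OF pb(1) _ _ e2, of B] bwh id_hom[OF ob(2)] a'h wh DA by (auto simp: hom_def)
  obtain t where t: "t \<in> hom C A P" "a \<cdot> t = v" "b \<cdot> t = \<alpha>"
    using pb_factor[OF pb(1) _ _ md(4), of A] vh ah a'h wh DA by (auto simp: hom_def)
  note ht = homD[OF kP(1)] homD[OF bP(1)] homD[OF t(1)]
  have sP: "split_ext C kP b bP"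
  proof (rule splitI[OF pb(3) bP(1) bP(3)])
    show "is_kernel C kP b"
    proof (rule kernelI[OF kP(1) pb(3) kP(3)])
      fix W g assume g: "g \<in> hom C W P" "b \<cdot> g = zr W B"
      note hg = homD[OF g(1)]
      have W: "W \<in> Obj C" using g hom_obj by blast
      have "\<alpha>' \<cdot> (a \<cdot> g) = zr W (Cod C \<alpha>')"
        using hs hp hg g(2) ob W by (simp add: reassoc[OF pd(3)])
      moreover have "a \<cdot> g \<in> hom C W (Dom C \<alpha>')" using hs hp hg by (simp add: hom_def)
      ultimately obtain x where x: "x \<in> hom C W (Dom C \<kappa>')" "\<kappa>' \<cdot> x = a \<cdot> g"
        using kernel_factor[OF sp'(4)] by blast
      note hx = homD[OF x(1)]
      have "kP \<cdot> x = g"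
      proof (rule pb_unique[OF pb(1), of _ W])
        show "kP \<cdot> x \<in> hom C W (Dom C a)" "g \<in> hom C W (Dom C a)" using ht hx hg hp hs by (simp_all add: hom_def)
        show "a \<cdot> kP \<cdot> x = a \<cdot> g" using ht hx hg hp hs x(2) by (simp add: reassoc[OF kP(2)])
        show "b \<cdot> kP \<cdot> x = b \<cdot> g" using ht hx hg hp hs g(2) ob W by (simp add: reassoc[OF kP(3)])
      qed
      then show "\<exists>x\<in>hom C W Y. kP \<cdot> x = g" using x hs by auto
    next
      fix W g h assume g: "g \<in> hom C W Y" and h: "h \<in> hom C W Y" and e: "kP \<cdot> g = kP \<cdot> h"
      have "a \<cdot> (kP \<cdot> g) = a \<cdot> (kP \<cdot> h)" using e by simp
      then have "\<kappa>' \<cdot> g = \<kappa>' \<cdot> h" using homD[OF g] homD[OF h] ht hp by (simp add: reassoc[OF kP(2)])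
      then show "g = h" using monoD[OF kernel_mono[OF sp'(4)]] g h hs by (auto simp: hom_def)
    qed
  qed
  have iso: "is_iso C t"
  proof (rule protoD[OF s sP, of "Id C Y" t "Id C B"])
    show "Id C Y \<in> hom C (Dom C \<kappa>) (Dom C kP)" using ht ob id_hom unfolding defs by simp
    show "t \<in> hom C (Dom C \<alpha>) (Dom C b)" using t hp unfolding defs by simp
    show "Id C B \<in> hom C (Cod C \<alpha>) (Cod C b)" using hp ob id_hom unfolding defs by simp
    show "t \<cdot> \<kappa> = kP \<cdot> Id C Y"
    proof (rule pb_unique[OF pb(1), of _ Y])
      show "t \<cdot> \<kappa> \<in> hom C Y (Dom C a)" "kP \<cdot> Id C Y \<in> hom C Y (Dom C a)" using ht hs hp ob by (simp_all add: hom_def)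
      show "a \<cdot> t \<cdot> \<kappa> = a \<cdot> kP \<cdot> Id C Y" using ht hs hp ob kP(2) md(3) by (simp add: reassoc[OF t(2)])
      show "b \<cdot> t \<cdot> \<kappa> = b \<cdot> kP \<cdot> Id C Y" using ht hs hp ob kP(3) sp(6)[unfolded defs] by (simp add: reassoc[OF t(3)])
    qed
    show "b \<cdot> t = Id C B \<cdot> \<alpha>" using t(3) hs ob by simp
    show "t \<cdot> \<beta> = bP \<cdot> Id C B"
    proof (rule pb_unique[OF pb(1), of _ B])
      show "t \<cdot> \<beta> \<in> hom C B (Dom C a)" "bP \<cdot> Id C B \<in> hom C B (Dom C a)" using ht hs hp ob by (simp_all add: hom_def)
      show "a \<cdot> t \<cdot> \<beta> = a \<cdot> bP \<cdot> Id C B" using ht hs hp ob bP(2) md(5) by (simp add: reassoc[OF t(2)])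
      show "b \<cdot> t \<cdot> \<beta> = b \<cdot> bP \<cdot> Id C B" using ht hs hp ob bP(3) sp(3)[unfolded defs] by (simp add: reassoc[OF t(3)])
    qed
    show "is_iso C (Id C Y)" "is_iso C (Id C B)" using ob id_iso by auto
  qed
  obtain j where j: "j \<in> hom C P A" "j \<cdot> t = Id C A" "t \<cdot> j = Id C P"
    using iso_inv[OF iso] ht by auto
  note hj = homD[OF j(1)]
  show ?thesis
  proof (rule pbI[OF a'h wh vh ah md(4)])
    fix W x y assume x: "x \<in> hom C W A'" and y: "y \<in> hom C W B" and e: "\<alpha>' \<cdot> x = w \<cdot> y"
    obtain hP where hP: "hP \<in> hom C W P" "a \<cdot> hP = x" "b \<cdot> hP = y"
      using pb_factor[OF pb(1) _ _ e, of W] x y hp hs by (auto simp: hom_def)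
    note hh = homD[OF hP(1)]
    have "v \<cdot> (j \<cdot> hP) = x" using hh hj ht hp hs hP(2) by (simp add: t(2)[symmetric] reassoc[OF j(3)])
    moreover have "\<alpha> \<cdot> (j \<cdot> hP) = y" using hh hj ht hp hs hP(3) by (simp add: t(3)[symmetric] reassoc[OF j(3)])
    moreover have "j \<cdot> hP \<in> hom C W A" using hP j comp_hom by blast
    ultimately show "\<exists>h\<in>hom C W A. v \<cdot> h = x \<and> \<alpha> \<cdot> h = y" by blast
  next
    fix W h h' assume h: "h \<in> hom C W A" and h': "h' \<in> hom C W A" and e1: "v \<cdot> h = v \<cdot> h'" and e2: "\<alpha> \<cdot> h = \<alpha> \<cdot> h'"
    have "t \<cdot> h = t \<cdot> h'"
    proof (rule pb_unique[OF pb(1), of _ W])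
      show "t \<cdot> h \<in> hom C W (Dom C a)" "t \<cdot> h' \<in> hom C W (Dom C a)" using homD[OF h] homD[OF h'] ht hp by (simp_all add: hom_def)
      show "a \<cdot> t \<cdot> h = a \<cdot> t \<cdot> h'" using homD[OF h] homD[OF h'] ht hp e1 by (simp add: reassoc[OF t(2)])
      show "b \<cdot> t \<cdot> h = b \<cdot> t \<cdot> h'" using homD[OF h] homD[OF h'] ht hp e2 by (simp add: reassoc[OF t(3)])
    qed
    then show "h = h'" using monoD[OF iso_mono[OF iso]] h h' ht by simp
  qed
qed

end

context pcat begin

lemma zr_kernel: assumes "A \<in> Obj C" "B \<in> Obj C" "a \<in> hom C A B"
  and tk: "\<And>W g. g \<in> hom C W A \<Longrightarrow> a \<cdot> g = zr W B \<Longrightarrow> g = zr W A"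
  shows "is_kernel C (zr z0 A) a"
proof (rule kernelI[OF zr_hom[OF z0_obj assms(1)] assms(3)])
  show "a \<cdot> zr z0 A = zr z0 B" using assms homD[OF assms(3)] by simp
next
  fix W g assume g: "g \<in> hom C W A" "a \<cdot> g = zr W B"
  have W: "W \<in> Obj C" using g hom_obj by blast
  have "g = zr z0 A \<cdot> ter W" using tk[OF g] assms W by simp
  then show "\<exists>x\<in>hom C W z0. zr z0 A \<cdot> x = g" using ter_hom[OF W] by blast
next
  fix W g h assume "g \<in> hom C W z0" "h \<in> hom C W z0"
  then show "g = h" using ter_unique by metis
qed

lemma trivial_kernel_mono: assumes f: "f \<in> hom C A B"
  and tk: "\<And>W g. g \<in> hom C W A \<Longrightarrow> f \<cdot> g = zr W B \<Longrightarrow> g = zr W A"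
  shows "is_mono C f"
proof -
  have ob: "A \<in> Obj C" "B \<in> Obj C" using f hom_obj by blast+
  obtain R r1 r2 where pb: "is_pullback C f f r1 r2" "r1 \<in> hom C R A" "r2 \<in> hom C R A"
    using pb_exists[OF f f] by blast
  note pd = pbD[OF pb(1)]
  have R: "R \<in> Obj C" using pb hom_obj by blast
  note hf = homD[OF f] and hr = homD[OF pb(2)] homD[OF pb(3)]
  obtain d where d: "d \<in> hom C A R" "r1 \<cdot> d = Id C A" "r2 \<cdot> d = Id C A"
    using pb_factor[OF pb(1), of "Id C A" A "Id C A"] id_hom[OF ob(1)] hf hr by (auto simp: hom_def)
  note hd = homD[OF d(1)]
  have s1: "split_ext C (zr z0 R) r1 d"
  proof (rule splitI[OF pb(2) d(1) d(2)])
    show "is_kernel C (zr z0 R) r1"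
    proof (rule zr_kernel[OF R ob(1) pb(2)])
      fix W g assume g: "g \<in> hom C W R" "r1 \<cdot> g = zr W A"
      have W: "W \<in> Obj C" using g hom_obj by blast
      note hg = homD[OF g(1)]
      have "f \<cdot> (r2 \<cdot> g) = zr W B" using hf hr hg g(2) ob W by (simp add: reassoc[OF pd(3)[symmetric]])
      then have e: "r2 \<cdot> g = zr W A" using tk[of "r2 \<cdot> g" W] hr hg by (simp add: hom_def)
      show "g = zr W R"
      proof (rule pb_unique[OF pb(1), of _ W])
        show "g \<in> hom C W (Dom C r1)" "zr W R \<in> hom C W (Dom C r1)" using hg hr W R by (simp_all add: hom_def)
        show "r1 \<cdot> g = r1 \<cdot> zr W R" using g(2) hr W R by simp
        show "r2 \<cdot> g = r2 \<cdot> zr W R" using e hr W R by simp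
      qed
    qed
  qed
  have s2: "split_ext C (zr z0 A) (Id C A) (Id C A)"
  proof (rule splitI[OF id_hom[OF ob(1)] id_hom[OF ob(1)]])
    show "Id C A \<cdot> Id C A = Id C A" using ob by simp
    show "is_kernel C (zr z0 A) (Id C A)"
      by (rule zr_kernel[OF ob(1) ob(1) id_hom[OF ob(1)]]) (simp add: hom_def)
  qed
  have iso: "is_iso C d"
  proof (rule protoD[OF s2 s1, of "Id C z0" d "Id C A"])
    show "Id C z0 \<in> hom C (Dom C (zr z0 A)) (Dom C (zr z0 R))" using ob R id_hom by simp
    show "d \<in> hom C (Dom C (Id C A)) (Dom C r1)" using d hr ob by simp
    show "Id C A \<in> hom C (Cod C (Id C A)) (Cod C r1)" using hr ob id_hom by simp
    show "d \<cdot> zr z0 A = zr z0 R \<cdot> Id C z0" using hd ob R by simp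
    show "r1 \<cdot> d = Id C A \<cdot> Id C A" using d ob by simp
    show "d \<cdot> Id C A = d \<cdot> Id C A" ..
    show "is_iso C (Id C z0)" "is_iso C (Id C A)" using ob id_iso by auto
  qed
  obtain j where j: "j \<in> hom C R A" "j \<cdot> d = Id C A" "d \<cdot> j = Id C R" using iso_inv[OF iso] hd by auto
  note hj = homD[OF j(1)]
  have "r1 = r1 \<cdot> (d \<cdot> j)" using j(3) hr by simp
  also have "\<dots> = j" using hr hd hj by (simp add: reassoc[OF d(2)])
  also have "\<dots> = r2 \<cdot> (d \<cdot> j)" using hr hd hj by (simp add: reassoc[OF d(3)])
  also have "\<dots> = r2" using j(3) hr by simp
  finally have r12: "r1 = r2" .
  show ?thesis
  proof (rule monoI)
    show "f \<in> Arr C" using hf by simp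
    fix W x y assume x: "x \<in> hom C W (Dom C f)" and y: "y \<in> hom C W (Dom C f)" and e: "f \<cdot> x = f \<cdot> y"
    obtain h where h: "h \<in> hom C W R" "r1 \<cdot> h = x" "r2 \<cdot> h = y"
      using pb_factor[OF pb(1) x y e] hr by (auto simp: hom_def)
    then show "x = y" using r12 by simp
  qed
qed

end

context pcat begin

lemma jmD: assumes "jm C r1 r2" "x \<in> hom C W (Dom C r1)" "y \<in> hom C W (Dom C r1)" "r1 \<cdot> x = r1 \<cdot> y" "r2 \<cdot> x = r2 \<cdot> y"
  shows "x = y"
proof -
  have c: "x \<in> Arr C \<and> y \<in> Arr C \<and> Cod C x = Dom C r1 \<and> Cod C y = Dom C r1 \<and>
        Dom C x = Dom C y \<and> r1 \<cdot> x = r1 \<cdot> y \<and> r2 \<cdot> x = r2 \<cdot> y" using assms(2-) by (simp add: hom_def)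
  show ?thesis using mp[OF spec[OF spec[OF assms(1)[unfolded jm_def], of x], of y] c] .
qed

lemma jmI: "(\<And>W x y. x \<in> hom C W (Dom C r1) \<Longrightarrow> y \<in> hom C W (Dom C r1) \<Longrightarrow> r1 \<cdot> x = r1 \<cdot> y \<Longrightarrow> r2 \<cdot> x = r2 \<cdot> y \<Longrightarrow> x = y)
  \<Longrightarrow> jm C r1 r2"
  unfolding jm_def hom_def by (intro allI impI) (elim conjE, blast)

lemma jm_pair_mono: assumes j: "jm C r1 r2" and r: "r1 \<in> hom C R Z" "r2 \<in> hom C R Z"
  and Q: "is_product C Z Z Q t1 t2" and mu: "mu \<in> hom C R Q" "t1 \<cdot> mu = r1" "t2 \<cdot> mu = r2"
  shows "is_mono C mu"
proof (rule monoI)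
  note qd = prodD[OF Q]
  show "mu \<in> Arr C" using mu by (simp add: hom_def)
  fix W x y assume x: "x \<in> hom C W (Dom C mu)" and y: "y \<in> hom C W (Dom C mu)" and e: "mu \<cdot> x = mu \<cdot> y"
  have "t1 \<cdot> (mu \<cdot> x) = t1 \<cdot> (mu \<cdot> y)" "t2 \<cdot> (mu \<cdot> x) = t2 \<cdot> (mu \<cdot> y)" using e by simp_all
  then have "r1 \<cdot> x = r1 \<cdot> y" "r2 \<cdot> x = r2 \<cdot> y" using homD[OF x] homD[OF y] homD[OF mu(1)] qd
    by (simp_all add: reassoc[OF mu(2)] reassoc[OF mu(3)] hom_def)
  then show "x = y" using jmD[OF j] x y mu r by (auto simp: hom_def)
qed

lemma equiv_relI: assumes r: "r1 \<in> hom C R Z" "r2 \<in> hom C R Z" and j: "jm C r1 r2"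
  and d: "d \<in> hom C Z R" "r1 \<cdot> d = Id C Z" "r2 \<cdot> d = Id C Z"
  and s: "s \<in> hom C R R" "r1 \<cdot> s = r2" "r2 \<cdot> s = r1"
  and t: "\<And>p q. is_pullback C r2 r1 p q \<Longrightarrow> \<exists>t \<in> hom C (Dom C p) R. r1 \<cdot> t = r1 \<cdot> p \<and> r2 \<cdot> t = r2 \<cdot> q"
  shows "equiv_rel C Z r1 r2"
proof -
  have DR: "Dom C r1 = R" using r by (simp add: hom_def)
  show ?thesis unfolding equiv_rel_def
  proof (intro conjI allI impI)
    show "r1 \<in> hom C (Dom C r1) Z" "r2 \<in> hom C (Dom C r1) Z" using r DR by simp_all
    show "\<And>x y. x \<in> Arr C \<and> y \<in> Arr C \<and> Cod C x = Dom C r1 \<and> Cod C y = Dom C r1 \<and> Dom C x = Dom C y \<and>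
      r1 \<cdot> x = r1 \<cdot> y \<and> r2 \<cdot> x = r2 \<cdot> y \<Longrightarrow> x = y" using j unfolding jm_def by blast
    show "\<exists>d\<in>hom C Z (Dom C r1). r1 \<cdot> d = Id C Z \<and> r2 \<cdot> d = Id C Z" using d DR by blast
    show "\<exists>s\<in>hom C (Dom C r1) (Dom C r1). r1 \<cdot> s = r2 \<and> r2 \<cdot> s = r1" using s DR by blast
    fix p q assume "is_pullback C r2 r1 p q"
    then show "\<exists>t\<in>hom C (Dom C p) (Dom C r1). r1 \<cdot> t = r1 \<cdot> p \<and> r2 \<cdot> t = r2 \<cdot> q" using t DR by simp
  qed
qed

lemma equiv_relD: assumes "equiv_rel C Z r1 r2"
  shows "r1 \<in> hom C (Dom C r1) Z" "r2 \<in> hom C (Dom C r1) Z" "jm C r1 r2"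
    "\<exists>d\<in>hom C Z (Dom C r1). r1 \<cdot> d = Id C Z \<and> r2 \<cdot> d = Id C Z"
proof -
  have "r1 \<in> hom C (Dom C r1) Z \<and> r2 \<in> hom C (Dom C r1) Z \<and> jm C r1 r2 \<and>
    (\<exists>d\<in>hom C Z (Dom C r1). r1 \<cdot> d = Id C Z \<and> r2 \<cdot> d = Id C Z)"
    using assms unfolding equiv_rel_def jm_def by (elim conjE) (intro conjI; assumption)
  then show "r1 \<in> hom C (Dom C r1) Z" "r2 \<in> hom C (Dom C r1) Z" "jm C r1 r2"
    "\<exists>d\<in>hom C Z (Dom C r1). r1 \<cdot> d = Id C Z \<and> r2 \<cdot> d = Id C Z" by simp_all
qed

end

context pcat begin

lemma reflexive_equiv: assumes r: "r1 \<in> hom C R Z" "r2 \<in> hom C R Z" and j: "jm C r1 r2"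
  and d: "d \<in> hom C Z R" "r1 \<cdot> d = Id C Z" "r2 \<cdot> d = Id C Z"
  shows "equiv_rel C Z r1 r2"
proof -
  have ob: "R \<in> Obj C" "Z \<in> Obj C" using r hom_obj by blast+
  note hr = homD[OF r(1)] homD[OF r(2)] and hd = homD[OF d(1)]
  obtain Q t1 t2 where Q: "is_product C Z Z Q t1 t2" using prod_exists[OF ob(2) ob(2)] by blast
  note qd = prodD[OF Q]
  note hq = homD[OF qd(2)] homD[OF qd(3)]
  obtain mu where mu: "mu \<in> hom C R Q" "t1 \<cdot> mu = r1" "t2 \<cdot> mu = r2" using prod_factor[OF Q r] by blast
  note hmu = homD[OF mu(1)]
  have mum: "is_mono C mu" by (rule jm_pair_mono[OF j r Q mu])
  obtain K k2 where k2: "k2 \<in> hom C K R" "is_kernel C k2 r2" using kernel_exists[OF r(2)] by blast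
  note hk = homD[OF k2(1)]
  have K: "K \<in> Obj C" using k2 hom_obj by blast
  have k2z: "r2 \<cdot> k2 = zr K Z" using kernelD(3)[OF k2(2)] hk hr by simp
  have k2m: "is_mono C k2" using kernel_mono[OF k2(2)] .
    have trans: "\<exists>t \<in> hom C (Dom C p) R. r1 \<cdot> t = r1 \<cdot> p \<and> r2 \<cdot> t = r2 \<cdot> q" if pq: "is_pullback C r2 r1 p q" for p q
  proof -
    note pd = pbD[OF pq]
    define H where "H = Dom C p"
    have hp: "p \<in> Arr C" "Dom C p = H" "Cod C p = R" "q \<in> Arr C" "Dom C q = H" "Cod C q = R"
      using pd hr unfolding H_def by (auto simp: hom_def)
    have H: "H \<in> Obj C" using hp by (metis dom_obj)
    have e1: "r2 \<cdot> (d \<cdot> r1) = r1 \<cdot> Id C R" using hr hd ob by (simp add: reassoc[OF d(3)])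
    obtain sg where sg: "sg \<in> hom C R H" "p \<cdot> sg = d \<cdot> r1" "q \<cdot> sg = Id C R"
      using pb_factor[OF pq _ _ e1, of R] hr hd hp ob by (auto simp: hom_def)
    note hsg = homD[OF sg(1)]
    have e2: "r2 \<cdot> k2 = r1 \<cdot> zr K R" using k2z hr K ob by simp
    obtain kH where kH: "kH \<in> hom C K H" "p \<cdot> kH = k2" "q \<cdot> kH = zr K R"
      using pb_factor[OF pq _ _ e2, of K] hr hk hp ob K by (auto simp: hom_def)
    note hkH = homD[OF kH(1)]
    have qh: "q \<in> hom C H R" using hp by (simp add: hom_def)
    have sH: "split_ext C kH q sg"
    proof (rule splitI[OF qh sg(1) sg(3)])
      show "is_kernel C kH q"
      proof (rule kernelI[OF kH(1) qh kH(3)])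
        fix W g assume g: "g \<in> hom C W H" "q \<cdot> g = zr W R"
        have W: "W \<in> Obj C" using g hom_obj by blast
        note hg = homD[OF g(1)]
        have "r2 \<cdot> (p \<cdot> g) = zr W Z" using hg hp hr g(2) W ob by (simp add: reassoc[OF pd(3)])
        moreover have "p \<cdot> g \<in> hom C W (Dom C r2)" using hg hp hr by (simp add: hom_def)
        ultimately obtain x where x: "x \<in> hom C W (Dom C k2)" "k2 \<cdot> x = p \<cdot> g"
          using kernel_factor[OF k2(2)] hr by auto
        note hx = homD[OF x(1)]
        have "kH \<cdot> x = g"
        proof (rule pb_unique[OF pq, of _ W])
          show "kH \<cdot> x \<in> hom C W (Dom C p)" "g \<in> hom C W (Dom C p)" using hx hkH hg hp hk by (simp_all add: hom_def)
          show "p \<cdot> kH \<cdot> x = p \<cdot> g" using hx hkH hp hk x(2) by (simp add: reassoc[OF kH(2)])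
          show "q \<cdot> kH \<cdot> x = q \<cdot> g" using hx hkH hp hk g(2) W K ob by (simp add: reassoc[OF kH(3)])
        qed
        then show "\<exists>x\<in>hom C W K. kH \<cdot> x = g" using x hk by auto
      next
        fix W g h assume g: "g \<in> hom C W K" and h: "h \<in> hom C W K" and e: "kH \<cdot> g = kH \<cdot> h"
        have "p \<cdot> (kH \<cdot> g) = p \<cdot> (kH \<cdot> h)" using e by simp
        then have "k2 \<cdot> g = k2 \<cdot> h" using homD[OF g] homD[OF h] hkH hp by (simp add: reassoc[OF kH(2)])
        then show "g = h" using monoD[OF k2m] g h hk by auto
      qed
    qed
    have rp: "r1 \<cdot> p \<in> hom C H Z" "r2 \<cdot> q \<in> hom C H Z" using hp hr by (simp_all add: hom_def)
    obtain mu' where mu': "mu' \<in> hom C H Q" "t1 \<cdot> mu' = r1 \<cdot> p" "t2 \<cdot> mu' = r2 \<cdot> q"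
      using prod_factor[OF Q rp] by blast
    note hmu' = homD[OF mu'(1)]
    have "\<exists>h \<in> hom C (Dom C q) R. mu \<cdot> h = mu'"
    proof (rule split_factor[OF sH mum mu(1)])
      show "mu' \<in> hom C (Dom C q) Q" using mu' hp by simp
      show "k2 \<in> hom C (Dom C kH) R" "Id C R \<in> hom C (Cod C q) R" using k2 hkH hp id_hom ob by simp_all
      show "mu \<cdot> k2 = mu' \<cdot> kH"
      proof (rule prod_unique[OF Q, of _ K])
        show "mu \<cdot> k2 \<in> hom C K Q" "mu' \<cdot> kH \<in> hom C K Q" using hmu hk hmu' hkH by (simp_all add: hom_def)
        show "t1 \<cdot> mu \<cdot> k2 = t1 \<cdot> mu' \<cdot> kH" using hmu hk hmu' hkH hq hp hr by (simp add: reassoc[OF mu(2)] reassoc[OF mu'(2)] reassoc[OF kH(2)] kH(2))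
        show "t2 \<cdot> mu \<cdot> k2 = t2 \<cdot> mu' \<cdot> kH" using hmu hk hmu' hkH hq hp hr k2z ob K
          by (simp add: reassoc[OF mu(3)] reassoc[OF mu'(3)] reassoc[OF kH(3)] kH(3))
      qed
      show "mu \<cdot> Id C R = mu' \<cdot> sg"
      proof (rule prod_unique[OF Q, of _ R])
        show "mu \<cdot> Id C R \<in> hom C R Q" "mu' \<cdot> sg \<in> hom C R Q" using hmu hsg hmu' ob by (simp_all add: hom_def)
        show "t1 \<cdot> mu \<cdot> Id C R = t1 \<cdot> mu' \<cdot> sg" using hmu hsg hmu' hq hp hr hd ob mu(2)
          by (simp add: reassoc[OF mu'(2)] reassoc[OF sg(2)] reassoc[OF d(2)] sg(2))
        show "t2 \<cdot> mu \<cdot> Id C R = t2 \<cdot> mu' \<cdot> sg" using hmu hsg hmu' hq hp hr hd ob mu(3)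
          by (simp add: reassoc[OF mu'(3)] reassoc[OF sg(3)] sg(3))
      qed
    qed
    then obtain h where h: "h \<in> hom C H R" "mu \<cdot> h = mu'" using hp by auto
    note hh = homD[OF h(1)]
    have "t1 \<cdot> (mu \<cdot> h) = r1 \<cdot> p" "t2 \<cdot> (mu \<cdot> h) = r2 \<cdot> q" using h(2) mu'(2,3) by simp_all
    then have "r1 \<cdot> h = r1 \<cdot> p" "r2 \<cdot> h = r2 \<cdot> q" using hh hmu hq by (simp_all add: reassoc[OF mu(2)] reassoc[OF mu(3)])
    then show ?thesis using h(1) hp by auto
  qed
    obtain D' p' q' where pb1: "is_pullback C r1 r1 p' q'" "p' \<in> hom C D' R" "q' \<in> hom C D' R"
    using pb_exists[OF r(1) r(1)] by blast
  note pd1 = pbD[OF pb1(1)]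
  note hp' = homD[OF pb1(2)] homD[OF pb1(3)]
  have D': "D' \<in> Obj C" using pb1 hom_obj by blast
  have rp': "r2 \<cdot> p' \<in> hom C D' Z" using hp' hr by (simp add: hom_def)
  obtain D P1 P2 where pb2: "is_pullback C r2 (r2 \<cdot> p') P1 P2" "P1 \<in> hom C D R" "P2 \<in> hom C D D'"
    using pb_exists[OF r(2) rp'] by blast
  note pd2 = pbD[OF pb2(1)]
  note hP = homD[OF pb2(2)] homD[OF pb2(3)]
  have D: "D \<in> Obj C" using pb2 hom_obj by blast
  have P2h: "P2 \<in> hom C D D'" by (rule pb2(3))
  have e1: "r2 \<cdot> p' = (r2 \<cdot> p') \<cdot> Id C D'" using hp' hr D' by simp
  obtain sg where sg: "sg \<in> hom C D' D" "P1 \<cdot> sg = p'" "P2 \<cdot> sg = Id C D'"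
    using pb_factor[OF pb2(1) _ _ e1, of D'] hp' hr hP D' by (auto simp: hom_def)
  note hsg = homD[OF sg(1)]
  have e2: "r2 \<cdot> k2 = (r2 \<cdot> p') \<cdot> zr K D'" using k2z hr hp' K D' ob by simp
  obtain kD where kD: "kD \<in> hom C K D" "P1 \<cdot> kD = k2" "P2 \<cdot> kD = zr K D'"
    using pb_factor[OF pb2(1) _ _ e2, of K] hr hk hp' hP K D' by (auto simp: hom_def)
  note hkD = homD[OF kD(1)]
  have sD: "split_ext C kD P2 sg"
  proof (rule splitI[OF P2h sg(1) sg(3)])
    show "is_kernel C kD P2"
    proof (rule kernelI[OF kD(1) P2h kD(3)])
      fix W g assume g: "g \<in> hom C W D" "P2 \<cdot> g = zr W D'"
      have W: "W \<in> Obj C" using g hom_obj by blast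
      note hg = homD[OF g(1)]
      have "r2 \<cdot> (P1 \<cdot> g) = zr W Z" using hg hP hr hp' g(2) W ob D' by (simp add: reassoc[OF pd2(3)])
      moreover have "P1 \<cdot> g \<in> hom C W (Dom C r2)" using hg hP hr by (simp add: hom_def)
      ultimately obtain x where x: "x \<in> hom C W (Dom C k2)" "k2 \<cdot> x = P1 \<cdot> g"
        using kernel_factor[OF k2(2)] hr by auto
      note hx = homD[OF x(1)]
      have "kD \<cdot> x = g"
      proof (rule pb_unique[OF pb2(1), of _ W])
        show "kD \<cdot> x \<in> hom C W (Dom C P1)" "g \<in> hom C W (Dom C P1)" using hx hkD hg hP hk by (simp_all add: hom_def)
        show "P1 \<cdot> kD \<cdot> x = P1 \<cdot> g" using hx hkD hP hk x(2) by (simp add: reassoc[OF kD(2)])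
        show "P2 \<cdot> kD \<cdot> x = P2 \<cdot> g" using hx hkD hP hk g(2) W K D' by (simp add: reassoc[OF kD(3)])
      qed
      then show "\<exists>x\<in>hom C W K. kD \<cdot> x = g" using x hk by auto
    next
      fix W g h assume g: "g \<in> hom C W K" and h: "h \<in> hom C W K" and e: "kD \<cdot> g = kD \<cdot> h"
      have "P1 \<cdot> (kD \<cdot> g) = P1 \<cdot> (kD \<cdot> h)" using e by simp
      then have "k2 \<cdot> g = k2 \<cdot> h" using homD[OF g] homD[OF h] hkD hP by (simp add: reassoc[OF kD(2)])
      then show "g = h" using monoD[OF k2m] g h hk by auto
    qed
  qed
  have fp: "r1 \<cdot> P1 \<in> hom C D Z" "r2 \<cdot> (q' \<cdot> P2) \<in> hom C D Z" using hP hr hp' by (simp_all add: hom_def)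
  obtain f' where f': "f' \<in> hom C D Q" "t1 \<cdot> f' = r1 \<cdot> P1" "t2 \<cdot> f' = r2 \<cdot> (q' \<cdot> P2)"
    using prod_factor[OF Q fp] by blast
  note hf' = homD[OF f'(1)]
  have "\<exists>h \<in> hom C (Dom C P2) R. mu \<cdot> h = f'"
  proof (rule split_factor[OF sD mum mu(1)])
    show "f' \<in> hom C (Dom C P2) Q" using f' hP by simp
    show "k2 \<in> hom C (Dom C kD) R" "q' \<in> hom C (Cod C P2) R" using k2 hkD hP pb1 by simp_all
    show "mu \<cdot> k2 = f' \<cdot> kD"
    proof (rule prod_unique[OF Q, of _ K])
      show "mu \<cdot> k2 \<in> hom C K Q" "f' \<cdot> kD \<in> hom C K Q" using hmu hk hf' hkD by (simp_all add: hom_def)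
      show "t1 \<cdot> mu \<cdot> k2 = t1 \<cdot> f' \<cdot> kD" using hmu hk hf' hkD hq hP hr
        by (simp add: reassoc[OF mu(2)] reassoc[OF f'(2)] reassoc[OF kD(2)] kD(2))
      show "t2 \<cdot> mu \<cdot> k2 = t2 \<cdot> f' \<cdot> kD" using hmu hk hf' hkD hq hP hr hp' k2z ob K D'
        by (simp add: reassoc[OF mu(3)] reassoc[OF f'(3)] reassoc[OF kD(3)] kD(3))
    qed
    show "mu \<cdot> q' = f' \<cdot> sg"
    proof (rule prod_unique[OF Q, of _ D'])
      show "mu \<cdot> q' \<in> hom C D' Q" "f' \<cdot> sg \<in> hom C D' Q" using hmu hsg hf' hp' by (simp_all add: hom_def)
      show "t1 \<cdot> mu \<cdot> q' = t1 \<cdot> f' \<cdot> sg" using hmu hsg hf' hq hP hr hp'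
        by (simp add: reassoc[OF mu(2)] reassoc[OF f'(2)] reassoc[OF sg(2)] sg(2) pd1(3))
      show "t2 \<cdot> mu \<cdot> q' = t2 \<cdot> f' \<cdot> sg" using hmu hsg hf' hq hP hr hp' D'
        by (simp add: reassoc[OF mu(3)] reassoc[OF f'(3)] reassoc[OF sg(3)] sg(3))
    qed
  qed
  then obtain g where g: "g \<in> hom C D R" "mu \<cdot> g = f'" using hP by auto
  note hg = homD[OF g(1)]
  have "t1 \<cdot> (mu \<cdot> g) = r1 \<cdot> P1" "t2 \<cdot> (mu \<cdot> g) = r2 \<cdot> (q' \<cdot> P2)" using g(2) f'(2,3) by simp_all
  then have g12: "r1 \<cdot> g = r1 \<cdot> P1" "r2 \<cdot> g = r2 \<cdot> (q' \<cdot> P2)" using hg hmu hq by (simp_all add: reassoc[OF mu(2)] reassoc[OF mu(3)])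
  have e3: "r1 \<cdot> Id C R = r1 \<cdot> (d \<cdot> r1)" using hr hd ob by (simp add: reassoc[OF d(2)])
  obtain e' where e': "e' \<in> hom C R D'" "p' \<cdot> e' = Id C R" "q' \<cdot> e' = d \<cdot> r1"
    using pb_factor[OF pb1(1) _ _ e3, of R] hr hd hp' ob by (auto simp: hom_def)
  note he' = homD[OF e'(1)]
  have e4: "r2 \<cdot> (d \<cdot> r2) = (r2 \<cdot> p') \<cdot> e'" using hr hd hp' he' ob by (simp add: reassoc[OF d(3)] e'(2))
  obtain e where e: "e \<in> hom C R D" "P1 \<cdot> e = d \<cdot> r2" "P2 \<cdot> e = e'"
    using pb_factor[OF pb2(1) _ _ e4, of R] hr hd hp' hP he' ob by (auto simp: hom_def)
  note he = homD[OF e(1)]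
  have s1: "r1 \<cdot> (g \<cdot> e) = r2" using hg he hr hd hP ob by (simp add: reassoc[OF g12(1)] reassoc[OF e(2)] reassoc[OF d(2)] e(2))
  have s2: "r2 \<cdot> (g \<cdot> e) = r1" using hg he hr hd hP hp' he' ob
    by (simp add: reassoc[OF g12(2)] e(2) e(3) e'(3) reassoc[OF d(3)])
  have sh: "g \<cdot> e \<in> hom C R R" using g e comp_hom by blast
  show ?thesis by (rule equiv_relI[OF r j d sh s1 s2 trans])
qed

end

locale main = pcat +
  fixes X G Y k p i c P \<pi>1 \<pi>2 d e v
  assumes X: "X \<in> Obj C" and gen: "generic_split_ext C X k p i"
    and GY: "G = Dom C p" "Y = Cod C p"
    and prodP: "is_product C X X P \<pi>1 \<pi>2"
    and dd: "d \<in> hom C X P" "zero_arr C (Comp C \<pi>1 d)" "Comp C \<pi>2 d = Id C X"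
    and ee: "e \<in> hom C X P" "Comp C \<pi>1 e = Id C X" "Comp C \<pi>2 e = Id C X"
    and conj: "split_ext_mor C d \<pi>1 e k p i v c"
begin

lemma sE: "split_ext C k p i" and DkX: "Dom C k = X" using gen_parts[OF gen] by auto

lemma hE: "k \<in> hom C X G" "p \<in> hom C G Y" "i \<in> hom C Y G" "p \<cdot> i = Id C Y" "p \<cdot> k = zr X Y"
  using split_parts[OF sE] DkX GY by auto

lemma obs: "X \<in> Obj C" "G \<in> Obj C" "Y \<in> Obj C" "P \<in> Obj C"
  using hE hom_obj prodD[OF prodP] X by blast+

lemma hP: "\<pi>1 \<in> hom C P X" "\<pi>2 \<in> hom C P X" using prodD[OF prodP] by auto

lemma d1: "\<pi>1 \<cdot> d = zr X X" using zero_arrD[OF dd(2)] dd(1) hP comp_hom by blast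

lemma sC: "split_ext C d \<pi>1 e" by (rule prod_split[OF prodP dd(1) d1 dd(3) ee(1,2)])

lemma hconj: "v \<in> hom C P G" "c \<in> hom C X Y" "v \<cdot> d = k" "p \<cdot> v = c \<cdot> \<pi>1" "v \<cdot> e = i \<cdot> c"
  using morD[OF conj] hP GY by (auto simp: hom_def)

lemmas hs = homD[OF hE(1)] homD[OF hE(2)] homD[OF hE(3)] homD[OF hP(1)] homD[OF hP(2)]
  homD[OF dd(1)] homD[OF ee(1)] homD[OF hconj(1)] homD[OF hconj(2)]

lemma conj_pb: "is_pullback C p c v \<pi>1"
  using mor_pullback[OF sC sE _ conj] DkX homD[OF dd(1)] by simp

lemma gen_classify: "split_ext C \<kappa> \<alpha> \<beta> \<Longrightarrow> Dom C \<kappa> = X \<Longrightarrow> \<exists>V w. split_ext_mor C \<kappa> \<alpha> \<beta> k p i V w"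
  using gen_exists[OF gen] by blast

lemma gen_uniq: "split_ext C \<kappa> \<alpha> \<beta> \<Longrightarrow> Dom C \<kappa> = X \<Longrightarrow> split_ext_mor C \<kappa> \<alpha> \<beta> k p i V1 w1 \<Longrightarrow>
   split_ext_mor C \<kappa> \<alpha> \<beta> k p i V2 w2 \<Longrightarrow> w1 = w2"
  using gen_unique[OF gen] by blast

lemma q_exists: "\<exists>q. q \<in> hom C G Y \<and> q \<cdot> k = c \<and> q \<cdot> i = Id C Y"
proof -
  note ob = obs
  obtain E e1 e2 where pb: "is_pullback C p p e1 e2" "e1 \<in> hom C E G" "e2 \<in> hom C E G"
    using pb_exists[OF hE(2) hE(2)] by blast
  note pd = pbD[OF pb(1)]
  note he = homD[OF pb(2)] homD[OF pb(3)]
  have E: "E \<in> Obj C" using pb hom_obj by blast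
  have eq1: "p \<cdot> Id C G = p \<cdot> Id C G" ..
  obtain dE where dE: "dE \<in> hom C G E" "e1 \<cdot> dE = Id C G" "e2 \<cdot> dE = Id C G"
    using pb_factor[OF pb(1) _ _ eq1, of G] id_hom[OF ob(2)] hs he by (auto simp: hom_def)
  have eq2: "p \<cdot> zr X G = p \<cdot> k" using hE hs ob by simp
  obtain kE where kE: "kE \<in> hom C X E" "e1 \<cdot> kE = zr X G" "e2 \<cdot> kE = k"
    using pb_factor[OF pb(1) _ _ eq2, of X] zr_hom[OF ob(1) ob(2)] hs he by (auto simp: hom_def)
  note hd = homD[OF dE(1)] homD[OF kE(1)]
  have sEq: "split_ext C kE e1 dE"
  proof (rule splitI[OF pb(2) dE(1) dE(2)])
    show "is_kernel C kE e1"
    proof (rule kernelI[OF kE(1) pb(2) kE(2)])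
      fix W g assume g: "g \<in> hom C W E" "e1 \<cdot> g = zr W G"
      have W: "W \<in> Obj C" using g hom_obj by blast
      note hg = homD[OF g(1)]
      have "p \<cdot> (e2 \<cdot> g) = zr W (Cod C p)" using hg hs he g(2) W ob by (simp add: reassoc[OF pd(3)[symmetric]])
      moreover have "e2 \<cdot> g \<in> hom C W (Dom C p)" using hg hs he by (simp add: hom_def)
      ultimately obtain x where x: "x \<in> hom C W (Dom C k)" "k \<cdot> x = e2 \<cdot> g"
        using kernel_factor[OF split_parts(4)[OF sE]] by blast
      note hx = homD[OF x(1)]
      have "kE \<cdot> x = g"
      proof (rule pb_unique[OF pb(1), of _ W])
        show "kE \<cdot> x \<in> hom C W (Dom C e1)" "g \<in> hom C W (Dom C e1)" using hx hd hg he hs DkX by (simp_all add: hom_def)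
        show "e1 \<cdot> kE \<cdot> x = e1 \<cdot> g" using hx hd he hs DkX g(2) W ob by (simp add: reassoc[OF kE(2)])
        show "e2 \<cdot> kE \<cdot> x = e2 \<cdot> g" using hx hd he hs DkX x(2) by (simp add: reassoc[OF kE(3)])
      qed
      then show "\<exists>x\<in>hom C W X. kE \<cdot> x = g" using x DkX by auto
    next
      fix W g h assume g: "g \<in> hom C W X" and h: "h \<in> hom C W X" and e: "kE \<cdot> g = kE \<cdot> h"
      have "e2 \<cdot> (kE \<cdot> g) = e2 \<cdot> (kE \<cdot> h)" using e by simp
      then have "k \<cdot> g = k \<cdot> h" using homD[OF g] homD[OF h] hd he by (simp add: reassoc[OF kE(3)])
      then show "g = h" using monoD[OF kernel_mono[OF split_parts(4)[OF sE]]] g h DkX by auto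
    qed
  qed
  obtain VE q where mq: "split_ext_mor C kE e1 dE k p i VE q"
    using gen_classify[OF sEq] homD[OF kE(1)] by blast
  have qh: "q \<in> hom C G Y" using morD(2)[OF mq] he hs by simp
    have kp: "k \<cdot> \<pi>1 \<in> hom C P G" "k \<cdot> \<pi>2 \<in> hom C P G" using hs by (simp_all add: hom_def)
  have eq3: "p \<cdot> (k \<cdot> \<pi>1) = p \<cdot> (k \<cdot> \<pi>2)" using hs ob by (simp add: reassoc[OF hE(5)])
  obtain u where u: "u \<in> hom C P E" "e1 \<cdot> u = k \<cdot> \<pi>1" "e2 \<cdot> u = k \<cdot> \<pi>2"
    using pb_factor[OF pb(1) _ _ eq3, of P] kp hs he by (auto simp: hom_def)
  note hu = homD[OF u(1)]
  have mu: "split_ext_mor C d \<pi>1 e kE e1 dE u k"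
  proof (rule morI)
    show "u \<in> hom C (Dom C \<pi>1) (Dom C e1)" "k \<in> hom C (Cod C \<pi>1) (Cod C e1)" using u hs he hE by simp_all
    show "u \<cdot> d = kE"
    proof (rule pb_unique[OF pb(1), of _ X])
      show "u \<cdot> d \<in> hom C X (Dom C e1)" "kE \<in> hom C X (Dom C e1)" using hu hs he hd DkX by (simp_all add: hom_def)
      show "e1 \<cdot> u \<cdot> d = e1 \<cdot> kE" using hu hs he hd ob kE(2) by (simp add: reassoc[OF u(2)] d1)
      show "e2 \<cdot> u \<cdot> d = e2 \<cdot> kE" using hu hs he hd ob kE(3) by (simp add: reassoc[OF u(3)] dd(3))
    qed
    show "e1 \<cdot> u = k \<cdot> \<pi>1" by (rule u(2))
    show "u \<cdot> e = dE \<cdot> k"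
    proof (rule pb_unique[OF pb(1), of _ X])
      show "u \<cdot> e \<in> hom C X (Dom C e1)" "dE \<cdot> k \<in> hom C X (Dom C e1)" using hu hs he hd by (simp_all add: hom_def)
      show "e1 \<cdot> u \<cdot> e = e1 \<cdot> dE \<cdot> k" using hu hs he hd ob by (simp add: reassoc[OF u(2)] reassoc[OF dE(2)] ee(2))
      show "e2 \<cdot> u \<cdot> e = e2 \<cdot> dE \<cdot> k" using hu hs he hd ob by (simp add: reassoc[OF u(3)] reassoc[OF dE(3)] ee(3))
    qed
  qed
  have m1: "split_ext_mor C d \<pi>1 e k p i (VE \<cdot> u) (q \<cdot> k)" by (rule mor_comp[OF sC sEq sE mu mq])
  have qk: "q \<cdot> k = c" using gen_uniq[OF sC _ m1 conj] hs DkX by simp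
    have eq4: "p \<cdot> (i \<cdot> p) = p \<cdot> Id C G" using hs ob by (simp add: reassoc[OF hE(4)])
  have ip: "i \<cdot> p \<in> hom C G G" using hs by (simp add: hom_def)
  obtain u' where u': "u' \<in> hom C G E" "e1 \<cdot> u' = i \<cdot> p" "e2 \<cdot> u' = Id C G"
    using pb_factor[OF pb(1) _ _ eq4, of G] ip id_hom[OF ob(2)] hs he by (auto simp: hom_def)
  note hu' = homD[OF u'(1)]
  have mu': "split_ext_mor C k p i kE e1 dE u' i"
  proof (rule morI)
    show "u' \<in> hom C (Dom C p) (Dom C e1)" "i \<in> hom C (Cod C p) (Cod C e1)" using u' hs he hE by simp_all
    show "u' \<cdot> k = kE"
    proof (rule pb_unique[OF pb(1), of _ X])
      show "u' \<cdot> k \<in> hom C X (Dom C e1)" "kE \<in> hom C X (Dom C e1)" using hu' hs he hd DkX by (simp_all add: hom_def)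
      show "e1 \<cdot> u' \<cdot> k = e1 \<cdot> kE" using hu' hs he hd ob kE(2) by (simp add: reassoc[OF u'(2)] hE(5))
      show "e2 \<cdot> u' \<cdot> k = e2 \<cdot> kE" using hu' hs he hd ob kE(3) by (simp add: reassoc[OF u'(3)])
    qed
    show "e1 \<cdot> u' = i \<cdot> p" by (rule u'(2))
    show "u' \<cdot> i = dE \<cdot> i"
    proof (rule pb_unique[OF pb(1), of _ Y])
      show "u' \<cdot> i \<in> hom C Y (Dom C e1)" "dE \<cdot> i \<in> hom C Y (Dom C e1)" using hu' hs he hd by (simp_all add: hom_def)
      show "e1 \<cdot> u' \<cdot> i = e1 \<cdot> dE \<cdot> i" using hu' hs he hd ob by (simp add: reassoc[OF u'(2)] reassoc[OF dE(2)] hE(4))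
      show "e2 \<cdot> u' \<cdot> i = e2 \<cdot> dE \<cdot> i" using hu' hs he hd ob by (simp add: reassoc[OF u'(3)] reassoc[OF dE(3)])
    qed
  qed
  have m2: "split_ext_mor C k p i k p i (VE \<cdot> u') (q \<cdot> i)" by (rule mor_comp[OF sE sEq sE mu' mq])
  have qi: "q \<cdot> i = Id C Y" using gen_uniq[OF sE DkX m2 mor_id[OF sE]] hs by simp
  show ?thesis using qh qk qi by blast
qed

end

context pcat begin
lemma reassoc3: "h \<cdot> (g \<cdot> f) = r \<Longrightarrow> f \<in> Arr C \<Longrightarrow> g \<in> Arr C \<Longrightarrow> h \<in> Arr C \<Longrightarrow> Cod C f = Dom C g \<Longrightarrow>
  Cod C g = Dom C h \<Longrightarrow> x \<in> Arr C \<Longrightarrow> Cod C x = Dom C f \<Longrightarrow> h \<cdot> (g \<cdot> (f \<cdot> x)) = r \<cdot> x"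
  by (metis assoc comp_arr Cod_comp Dom_comp)
end

context main begin

lemma commute_zero: assumes cm: "commute C g (Id C X)" shows "c \<cdot> g = zr (Dom C g) Y"
proof -
  define B where "B = Dom C g"
  have g0: "g \<in> Arr C" "Cod C g = X" using cm obs unfolding commute_def by auto
  obtain P' p1 p2 l r \<phi> where cd: "is_product C B X P' p1 p2"
        "l \<in> hom C B P'" "p1 \<cdot> l = Id C B" "zero_arr C (p2 \<cdot> l)"
        "r \<in> hom C X P'" "zero_arr C (p1 \<cdot> r)" "p2 \<cdot> r = Id C X"
        "\<phi> \<in> hom C P' X" "\<phi> \<cdot> l = g" "\<phi> \<cdot> r = Id C X"
    using cm obs unfolding commute_def B_def by auto
  note pd = prodD[OF cd(1)]
  have ob: "B \<in> Obj C" "P' \<in> Obj C" using pd hom_obj by blast+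
  note hh = homD[OF pd(2)] homD[OF pd(3)] homD[OF cd(2)] homD[OF cd(5)] homD[OF cd(8)]
  have g: "g \<in> hom C B X" using g0 B_def by (simp add: hom_def)
  note hg = homD[OF g]
  have p1r: "p1 \<cdot> r = zr X B" using zero_arrD[OF cd(6)] hh by (simp add: hom_def)
  have p2l: "p2 \<cdot> l = zr B X" using zero_arrD[OF cd(4)] hh by (simp add: hom_def)
  have s0: "split_ext C r p1 l" by (rule prod_split[OF cd(1) cd(5) p1r cd(7) cd(2) cd(3)])
  have m1: "split_ext_mor C r p1 l k p i (k \<cdot> p2) (zr B Y)"
  proof (rule morI)
    show "k \<cdot> p2 \<in> hom C (Dom C p1) (Dom C p)" "zr B Y \<in> hom C (Cod C p1) (Cod C p)" using hh hs ob obs by (simp_all add: hom_def)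
    show "(k \<cdot> p2) \<cdot> r = k" using hh hs by (simp add: cd(7))
    show "p \<cdot> k \<cdot> p2 = zr B Y \<cdot> p1" using hh hs ob obs by (simp add: reassoc[OF hE(5)])
    show "(k \<cdot> p2) \<cdot> l = i \<cdot> zr B Y" using hh hs ob obs by (simp add: p2l)
  qed
  have gp: "g \<cdot> p1 \<in> hom C P' X" using hh hg by (simp add: hom_def)
  obtain w where w: "w \<in> hom C P' P" "\<pi>1 \<cdot> w = g \<cdot> p1" "\<pi>2 \<cdot> w = \<phi>" using prod_factor[OF prodP gp cd(8)] by blast
  note hw = homD[OF w(1)]
  have m2: "split_ext_mor C r p1 l d \<pi>1 e w g"
  proof (rule morI)
    show "w \<in> hom C (Dom C p1) (Dom C \<pi>1)" "g \<in> hom C (Cod C p1) (Cod C \<pi>1)" using hw hh hs hg by (simp_all add: hom_def)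
    show "w \<cdot> r = d"
    proof (rule prod_unique[OF prodP, of _ X])
      show "w \<cdot> r \<in> hom C X P" "d \<in> hom C X P" using hw hh dd(1) by (simp_all add: hom_def)
      show "\<pi>1 \<cdot> w \<cdot> r = \<pi>1 \<cdot> d" using hw hh hs hg ob obs by (simp add: reassoc[OF w(2)] p1r d1)
      show "\<pi>2 \<cdot> w \<cdot> r = \<pi>2 \<cdot> d" using hw hh hs by (simp add: reassoc[OF w(3)] cd(10) dd(3))
    qed
    show "\<pi>1 \<cdot> w = g \<cdot> p1" by (rule w(2))
    show "w \<cdot> l = e \<cdot> g"
    proof (rule prod_unique[OF prodP, of _ B])
      show "w \<cdot> l \<in> hom C B P" "e \<cdot> g \<in> hom C B P" using hw hh hs hg by (simp_all add: hom_def)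
      show "\<pi>1 \<cdot> w \<cdot> l = \<pi>1 \<cdot> e \<cdot> g" using hw hh hs hg by (simp add: reassoc[OF w(2)] reassoc[OF ee(2)] cd(3))
      show "\<pi>2 \<cdot> w \<cdot> l = \<pi>2 \<cdot> e \<cdot> g" using hw hh hs hg by (simp add: reassoc[OF w(3)] reassoc[OF ee(3)] cd(9))
    qed
  qed
  have m3: "split_ext_mor C r p1 l k p i (v \<cdot> w) (c \<cdot> g)" by (rule mor_comp[OF s0 sC sE m2 conj])
  have "c \<cdot> g = zr B Y" using gen_uniq[OF s0 _ m3 m1] hh by simp
  then show ?thesis unfolding B_def .
qed

lemma zero_commute: assumes g: "g \<in> hom C B X" and cg: "c \<cdot> g = zr B Y" shows "commute C g (Id C X)"
proof -
  note hg = homD[OF g]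
  have B: "B \<in> Obj C" using g hom_obj by blast
  note ob = obs
  obtain Q q1 q2 where Q: "is_product C B X Q q1 q2" using prod_exists[OF B ob(1)] by blast
  note qd = prodD[OF Q]
  note hq = homD[OF qd(2)] homD[OF qd(3)]
  obtain l where l: "l \<in> hom C B Q" "q1 \<cdot> l = Id C B" "q2 \<cdot> l = zr B X"
    using prod_factor[OF Q id_hom[OF B] zr_hom[OF B ob(1)]] by blast
  obtain r where r: "r \<in> hom C X Q" "q1 \<cdot> r = zr X B" "q2 \<cdot> r = Id C X"
    using prod_factor[OF Q zr_hom[OF ob(1) B] id_hom[OF ob(1)]] by blast
  obtain l' where l': "l' \<in> hom C B Q" "q1 \<cdot> l' = Id C B" "q2 \<cdot> l' = g"
    using prod_factor[OF Q id_hom[OF B] g] by blast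
  note hl = homD[OF l(1)] homD[OF r(1)] homD[OF l'(1)]
  have sg: "split_ext C r q1 l'" by (rule prod_split[OF Q r l'(1,2)])
  have gq: "g \<cdot> q1 \<in> hom C Q X" using hg hq by (simp add: hom_def)
  obtain w where w: "w \<in> hom C Q P" "\<pi>1 \<cdot> w = g \<cdot> q1" "\<pi>2 \<cdot> w = q2" using prod_factor[OF prodP gq qd(3)] by blast
  note hw = homD[OF w(1)]
  have wr: "w \<cdot> r = d"
  proof (rule prod_unique[OF prodP, of _ X])
    show "w \<cdot> r \<in> hom C X P" "d \<in> hom C X P" using hw hl dd(1) by (simp_all add: hom_def)
    show "\<pi>1 \<cdot> w \<cdot> r = \<pi>1 \<cdot> d" using hw hl hs hg hq B ob by (simp add: reassoc[OF w(2)] r(2) d1)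
    show "\<pi>2 \<cdot> w \<cdot> r = \<pi>2 \<cdot> d" using hw hl hs by (simp add: reassoc[OF w(3)] r(3) dd(3))
  qed
  have wl': "w \<cdot> l' = e \<cdot> g"
  proof (rule prod_unique[OF prodP, of _ B])
    show "w \<cdot> l' \<in> hom C B P" "e \<cdot> g \<in> hom C B P" using hw hl hs hg by (simp_all add: hom_def)
    show "\<pi>1 \<cdot> w \<cdot> l' = \<pi>1 \<cdot> e \<cdot> g" using hw hl hs hg hq by (simp add: reassoc[OF w(2)] reassoc[OF ee(2)] l'(2))
    show "\<pi>2 \<cdot> w \<cdot> l' = \<pi>2 \<cdot> e \<cdot> g" using hw hl hs hg hq by (simp add: reassoc[OF w(3)] reassoc[OF ee(3)] l'(3))
  qed
  have mg: "split_ext_mor C r q1 l' k p i (v \<cdot> w) (zr B Y)"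
  proof (rule morI)
    show "v \<cdot> w \<in> hom C (Dom C q1) (Dom C p)" "zr B Y \<in> hom C (Cod C q1) (Cod C p)" using hw hs hq B ob by (simp_all add: hom_def)
    show "(v \<cdot> w) \<cdot> r = k" using hw hs hl by (simp add: wr hconj(3))
    show "p \<cdot> v \<cdot> w = zr B Y \<cdot> q1" using hw hs hq hg B ob by (simp add: reassoc[OF hconj(4)] w(2) reassoc[OF cg])
    show "(v \<cdot> w) \<cdot> l' = i \<cdot> zr B Y" using hw hs hl hg B ob by (simp add: wl' reassoc[OF hconj(5)] cg)
  qed
  have pb: "is_pullback C p (zr B Y) (v \<cdot> w) q1" using mor_pullback[OF sg sE _ mg] hl DkX by simp
  have kq: "k \<cdot> q2 \<in> hom C Q G" using hs hq by (simp add: hom_def)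
  have eq: "p \<cdot> (k \<cdot> q2) = zr B Y \<cdot> q1" using hs hq B ob by (simp add: reassoc[OF hE(5)])
  obtain \<theta> where th: "\<theta> \<in> hom C Q Q" "(v \<cdot> w) \<cdot> \<theta> = k \<cdot> q2" "q1 \<cdot> \<theta> = q1"
    using pb_factor[OF pb _ _ eq, of Q] kq qd hw hs hq B ob by (auto simp: hom_def)
  note ht = homD[OF th(1)]
  have th2: "v \<cdot> (w \<cdot> \<theta>) = k \<cdot> q2" using th(2) hw hs ht by simp
  have thr: "\<theta> \<cdot> r = r"
  proof (rule pb_unique[OF pb, of _ X])
    show "\<theta> \<cdot> r \<in> hom C X (Dom C (v \<cdot> w))" "r \<in> hom C X (Dom C (v \<cdot> w))" using ht hl hw hs by (simp_all add: hom_def)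
    show "(v \<cdot> w) \<cdot> \<theta> \<cdot> r = (v \<cdot> w) \<cdot> r" using ht hl hw hs hq
      by (simp add: reassoc3[OF th2] wr hconj(3) r(3))
    show "q1 \<cdot> \<theta> \<cdot> r = q1 \<cdot> r" using ht hl hq by (simp add: reassoc[OF th(3)])
  qed
  have thl: "\<theta> \<cdot> l = l'"
  proof (rule pb_unique[OF pb, of _ B])
    show "\<theta> \<cdot> l \<in> hom C B (Dom C (v \<cdot> w))" "l' \<in> hom C B (Dom C (v \<cdot> w))" using ht hl hw hs by (simp_all add: hom_def)
    show "(v \<cdot> w) \<cdot> \<theta> \<cdot> l = (v \<cdot> w) \<cdot> l'" using ht hl hw hs hq hg B ob
      by (simp add: reassoc3[OF th2] wl' reassoc[OF hconj(5)] cg l(3))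
    show "q1 \<cdot> \<theta> \<cdot> l = q1 \<cdot> l'" using ht hl hq by (simp add: reassoc[OF th(3)] l(2) l'(2))
  qed
  have phi: "q2 \<cdot> \<theta> \<in> hom C Q X" using ht hq by (simp add: hom_def)
  have "q2 \<cdot> \<theta> \<cdot> l = g" "q2 \<cdot> \<theta> \<cdot> r = Id C X" using thl thr l'(3) r(3) by simp_all
  then have phil: "(q2 \<cdot> \<theta>) \<cdot> l = g" "(q2 \<cdot> \<theta>) \<cdot> r = Id C X" using hq ht hl by simp_all
  have z1: "zero_arr C (q2 \<cdot> l)" "zero_arr C (q1 \<cdot> r)" using l(3) r(2) hl hq B ob by (auto intro!: zero_arrI simp: hom_def)
  show ?thesis unfolding commute_def
    apply (intro conjI)
    using hg ob apply simp_all
    using Q l(1,2) r(1,3) z1 phi phil by blast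
qed

end

context pcat begin

lemma protosplit_bourn: assumes k: "is_kernel C m a" and b: "b \<in> hom C (Cod C a) (Dom C a)" "a \<cdot> b = Id C (Cod C a)"
  shows "bourn_normal C m"
proof -
  note kd = kernelD[OF k]
  define S where "S = Dom C m"
  define A where "A = Dom C a"
  define B where "B = Cod C a"
  have mh: "m \<in> hom C S A" and ah: "a \<in> hom C A B" using kd unfolding S_def A_def B_def by (simp_all add: hom_def)
  note hm = homD[OF mh] homD[OF ah]
  have ob: "S \<in> Obj C" "A \<in> Obj C" "B \<in> Obj C" using mh ah hom_obj by blast+
  have am: "a \<cdot> m = zr S B" using kd unfolding S_def B_def by simp
  have mm: "is_mono C m" using kernel_mono[OF k] .
  obtain R r1 r2 where pb: "is_pullback C a a r1 r2" "r1 \<in> hom C R A" "r2 \<in> hom C R A"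
    using pb_exists[OF ah ah] by blast
  note pd = pbD[OF pb(1)]
  note hr = homD[OF pb(2)] homD[OF pb(3)]
  have jmr: "jm C r1 r2" by (rule jmI) (rule pb_unique[OF pb(1)], assumption+)
  have eq1: "a \<cdot> Id C A = a \<cdot> Id C A" ..
  obtain dR where dR: "dR \<in> hom C A R" "r1 \<cdot> dR = Id C A" "r2 \<cdot> dR = Id C A"
    using pb_factor[OF pb(1) _ _ eq1, of A] id_hom[OF ob(2)] hm hr by (auto simp: hom_def)
  have er: "equiv_rel C A r1 r2" by (rule reflexive_equiv[OF pb(2,3) jmr dR])
  obtain P' p1 p2 where P': "is_product C S S P' p1 p2" using prod_exists[OF ob(1) ob(1)] by blast
  note qd = prodD[OF P']
  note hq = homD[OF qd(2)] homD[OF qd(3)]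
  have mp: "m \<cdot> p1 \<in> hom C P' A" "m \<cdot> p2 \<in> hom C P' A" using hq hm by (simp_all add: hom_def)
  have eq2: "a \<cdot> (m \<cdot> p1) = a \<cdot> (m \<cdot> p2)" using hq hm ob by (simp add: reassoc[OF am])
  obtain mt where mt: "mt \<in> hom C P' R" "r1 \<cdot> mt = m \<cdot> p1" "r2 \<cdot> mt = m \<cdot> p2"
    using pb_factor[OF pb(1) _ _ eq2, of P'] mp hr hm by (auto simp: hom_def)
  note hmt = homD[OF mt(1)]
  have pbm: "is_pullback C r1 m mt p1"
  proof (rule pbI[OF pb(2) mh mt(1) qd(2) mt(2)])
    fix W x y assume x: "x \<in> hom C W R" and y: "y \<in> hom C W S" and e: "r1 \<cdot> x = m \<cdot> y"
    note hx = homD[OF x] homD[OF y]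
    have W: "W \<in> Obj C" using x hom_obj by blast
    have "a \<cdot> (r2 \<cdot> x) = zr W (Cod C a)" using hx hr hm ob W e
      by (simp add: reassoc[OF pd(3)[symmetric]] reassoc[OF am] B_def[symmetric])
    moreover have "r2 \<cdot> x \<in> hom C W (Dom C a)" using hx hr hm by (simp add: hom_def)
    ultimately obtain y2 where y2: "y2 \<in> hom C W S" "m \<cdot> y2 = r2 \<cdot> x" using kernel_factor[OF k] S_def by auto
    obtain h where h: "h \<in> hom C W P'" "p1 \<cdot> h = y" "p2 \<cdot> h = y2" using prod_factor[OF P' y y2(1)] by blast
    note hh = homD[OF h(1)] homD[OF y2(1)]
    have "mt \<cdot> h = x"
    proof (rule pb_unique[OF pb(1), of _ W])
      show "mt \<cdot> h \<in> hom C W (Dom C r1)" "x \<in> hom C W (Dom C r1)" using hh hmt hr hx by (simp_all add: hom_def)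
      show "r1 \<cdot> mt \<cdot> h = r1 \<cdot> x" using hh hmt hr hx hq hm e by (simp add: reassoc[OF mt(2)] h(2))
      show "r2 \<cdot> mt \<cdot> h = r2 \<cdot> x" using hh hmt hr hx hq hm y2(2) by (simp add: reassoc[OF mt(3)] h(3))
    qed
    then show "\<exists>h\<in>hom C W P'. mt \<cdot> h = x \<and> p1 \<cdot> h = y" using h by blast
  next
    fix W h h' assume h: "h \<in> hom C W P'" and h': "h' \<in> hom C W P'" and e1: "mt \<cdot> h = mt \<cdot> h'" and e2: "p1 \<cdot> h = p1 \<cdot> h'"
    note hh = homD[OF h] homD[OF h']
    have "r2 \<cdot> (mt \<cdot> h) = r2 \<cdot> (mt \<cdot> h')" using e1 by simp
    then have "m \<cdot> (p2 \<cdot> h) = m \<cdot> (p2 \<cdot> h')" using hh hmt hr hq hm by (simp add: reassoc[OF mt(3)])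
    then have "p2 \<cdot> h = p2 \<cdot> h'" using monoD[OF mm, of "p2 \<cdot> h" W "p2 \<cdot> h'"] hh hq hm by (simp add: hom_def)
    then show "h = h'" using prod_unique[OF P' h h' e2] by simp
  qed
  show ?thesis unfolding bourn_normal_def
    apply (rule conjI[OF mm])
    apply (rule exI[of _ r1], rule exI[of _ r2], rule exI[of _ P'], rule exI[of _ p1], rule exI[of _ p2], rule exI[of _ mt])
    using er P' mt pbm hr hm unfolding S_def[symmetric] A_def by (auto simp: hom_def)
qed

lemma bn_kernel: assumes er: "equiv_rel C Z r1 r2" and P': "is_product C S S P' p1 p2"
  and mt: "mt \<in> hom C P' (Dom C r1)" "r1 \<cdot> mt = m \<cdot> p1" "r2 \<cdot> mt = m \<cdot> p2" and pb: "is_pullback C r1 m mt p1"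
  and mh: "m \<in> hom C S Z" and d: "d' \<in> hom C S P'" "p1 \<cdot> d' = zr S S" "p2 \<cdot> d' = Id C S"
  shows "is_kernel C (mt \<cdot> d') r1"
proof -
  note ed = equiv_relD[OF er]
  define R where "R = Dom C r1"
  have rh: "r1 \<in> hom C R Z" using ed R_def by simp
  note qd = prodD[OF P']
  note hh = homD[OF rh] homD[OF mh] homD[OF qd(2)] homD[OF qd(3)] homD[OF d(1)] homD[OF mt(1)[folded R_def]]
  have ob: "S \<in> Obj C" "Z \<in> Obj C" "R \<in> Obj C" "P' \<in> Obj C" using rh mh qd hom_obj by blast+
  have mdh: "mt \<cdot> d' \<in> hom C S R" using hh by (simp add: hom_def)
  show ?thesis
  proof (rule kernelI[OF mdh rh])
    show "r1 \<cdot> mt \<cdot> d' = zr S Z" using hh ob by (simp add: reassoc[OF mt(2)] d(2))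
  next
    fix W f assume f: "f \<in> hom C W R" "r1 \<cdot> f = zr W Z"
    note hf = homD[OF f(1)]
    have W: "W \<in> Obj C" using f hom_obj by blast
    have eq: "r1 \<cdot> f = m \<cdot> zr W S" using f(2) hh W ob by simp
    obtain h where h: "h \<in> hom C W P'" "mt \<cdot> h = f" "p1 \<cdot> h = zr W S"
      using pb_factor[OF pb _ _ eq, of W] f(1) zr_hom[OF W ob(1)] hh by (auto simp: hom_def)
    note hh2 = homD[OF h(1)]
    have "d' \<cdot> (p2 \<cdot> h) = h"
    proof (rule prod_unique[OF P', of _ W])
      show "d' \<cdot> (p2 \<cdot> h) \<in> hom C W P'" "h \<in> hom C W P'" using hh hh2 h(1) by (simp_all add: hom_def)
      show "p1 \<cdot> d' \<cdot> p2 \<cdot> h = p1 \<cdot> h" using hh hh2 ob W by (simp add: reassoc[OF d(2)] h(3))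
      show "p2 \<cdot> d' \<cdot> p2 \<cdot> h = p2 \<cdot> h" using hh hh2 ob W by (simp add: reassoc[OF d(3)])
    qed
    then have "(mt \<cdot> d') \<cdot> (p2 \<cdot> h) = f" using hh hh2 h(2) by simp
    moreover have "p2 \<cdot> h \<in> hom C W S" using hh hh2 by (simp add: hom_def)
    ultimately show "\<exists>g\<in>hom C W S. (mt \<cdot> d') \<cdot> g = f" by blast
  next
    fix W g h assume g: "g \<in> hom C W S" and h: "h \<in> hom C W S" and e: "(mt \<cdot> d') \<cdot> g = (mt \<cdot> d') \<cdot> h"
    note hg = homD[OF g] homD[OF h]
    have W: "W \<in> Obj C" using g hom_obj by blast
    have "d' \<cdot> g = d' \<cdot> h"
    proof (rule pb_unique[OF pb, of _ W])
      show "d' \<cdot> g \<in> hom C W (Dom C mt)" "d' \<cdot> h \<in> hom C W (Dom C mt)" using hh hg by (simp_all add: hom_def)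
      show "mt \<cdot> d' \<cdot> g = mt \<cdot> d' \<cdot> h" using e hh hg by simp
      show "p1 \<cdot> d' \<cdot> g = p1 \<cdot> d' \<cdot> h" using hh hg ob W by (simp add: reassoc[OF d(2)])
    qed
    then have "p2 \<cdot> (d' \<cdot> g) = p2 \<cdot> (d' \<cdot> h)" by simp
    then show "g = h" using hh hg by (simp add: reassoc[OF d(3)])
  qed
qed

lemma id_protosplit: assumes Y: "Y \<in> Obj C" shows "protosplit_mono C (Id C Y)"
proof -
  have k: "is_kernel C (Id C Y) (ter Y)"
  proof (rule kernelI[OF id_hom[OF Y] ter_hom[OF Y]])
    show "ter Y \<cdot> Id C Y = zr Y z0" using to_zero[OF z0 ter_hom[OF Y]] Y ter_hom[OF Y] by (simp add: hom_def)
  next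
    fix W f assume "f \<in> hom C W Y"
    then show "\<exists>g\<in>hom C W Y. Id C Y \<cdot> g = f" by (auto simp: hom_def)
  next
    fix W g h assume "g \<in> hom C W Y" "h \<in> hom C W Y" "Id C Y \<cdot> g = Id C Y \<cdot> h"
    then show "g = h" by (simp add: hom_def)
  qed
  have tz: "ter Y \<cdot> ini Y = Id C z0" using ter_unique[of "Id C z0" z0] ter_unique[of "ter Y \<cdot> ini Y" z0]
    comp_hom[OF ini_hom[OF Y] ter_hom[OF Y]] id_hom[OF z0_obj] by simp
  show ?thesis unfolding protosplit_mono_def
    apply (rule exI[of _ "ter Y"], rule exI[of _ "ini Y"], intro conjI k)
    using tz ini_hom[OF Y] ter_hom[OF Y] Y by (auto simp: hom_def)
qed

end

context main begin

lemma mono_center: assumes cm: "is_mono C c" shows "trivial_center C X"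
proof -
  note ob = obs
  define z where "z = zr z0 X"
  have zh: "z \<in> hom C z0 X" using zr_hom[OF z0_obj ob(1)] z_def by simp
  note hz = homD[OF zh]
  have cz: "c \<cdot> z = zr z0 Y" using hs ob unfolding z_def by simp
  have czm: "commute C z (Id C X)" using zero_commute[OF zh cz] .
  have ctr: "is_center C X z" unfolding is_center_def
  proof (intro conjI allI impI)
    show "z \<in> Arr C" "Cod C z = X" "commute C z (Id C X)" using hz czm by simp_all
    fix g assume g: "g \<in> Arr C \<and> Cod C g = X \<and> commute C g (Id C X)"
    define B where "B = Dom C g"
    have gh: "g \<in> hom C B X" using g B_def by (simp add: hom_def)
    have B: "B \<in> Obj C" using gh hom_obj by blast
    have "c \<cdot> g = zr B Y" using commute_zero[of g] g B_def by simp
    also have "\<dots> = c \<cdot> zr B X" using hs ob B by simp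
    finally have "g = zr B X" using monoD[OF cm, of g B "zr B X"] gh zr_hom[OF B ob(1)] hs by simp
    moreover have "z \<cdot> ter B = zr B X" using ter_hom[OF B] B ob unfolding z_def by (simp add: hom_def)
    ultimately have gz: "z \<cdot> ter B = g" by simp
    show "\<exists>!h. h \<in> hom C (Dom C g) (Dom C z) \<and> z \<cdot> h = g"
    proof (rule ex1I[of _ "ter B"])
      show "ter B \<in> hom C (Dom C g) (Dom C z) \<and> z \<cdot> ter B = g" using ter_hom[OF B] gz hz B_def by simp
      fix h assume "h \<in> hom C (Dom C g) (Dom C z) \<and> z \<cdot> h = g"
      then show "h = ter B" using ter_unique hz B_def by simp
    qed
  qed
  show ?thesis unfolding trivial_center_def using ctr hz z0 by auto
qed

lemma center_mono: assumes tc: "trivial_center C X" shows "is_mono C c"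
proof -
  obtain z where z: "is_center C X z" "is_zero_obj C (Dom C z)" using tc unfolding trivial_center_def by blast
  have zh: "z \<in> hom C (Dom C z) X" using z(1) unfolding is_center_def by (simp add: hom_def)
  show ?thesis
  proof (rule trivial_kernel_mono[OF hconj(2)])
    fix W g assume g: "g \<in> hom C W X" "c \<cdot> g = zr W Y"
    have cm: "commute C g (Id C X)" by (rule zero_commute[OF g])
    have H: "\<forall>g. g \<in> Arr C \<and> Cod C g = X \<and> commute C g (Id C X) \<longrightarrow>
        (\<exists>!h. h \<in> hom C (Dom C g) (Dom C z) \<and> z \<cdot> h = g)" using z(1) unfolding is_center_def by (elim conjE)
    have "g \<in> Arr C \<and> Cod C g = X \<and> commute C g (Id C X)" using g(1) cm by (simp add: hom_def)
    note mp[OF spec[OF H, of g] this]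
    then obtain h where h: "h \<in> hom C W (Dom C z)" "z \<cdot> h = g" using g(1) by (auto simp: hom_def)
    show "g = zr W X" using zero_hom_from[OF z(2) h(1) zh] h(2) by simp
  qed
qed

definition qq where "qq = (SOME q. q \<in> hom C G Y \<and> q \<cdot> k = c \<and> q \<cdot> i = Id C Y)"

lemma qq: "qq \<in> hom C G Y" "qq \<cdot> k = c" "qq \<cdot> i = Id C Y"
  using someI_ex[OF q_exists] unfolding qq_def[symmetric] by auto

lemma qv: "qq \<cdot> v = c \<cdot> \<pi>2"
proof (rule split_epi[OF sC])
  note hq = homD[OF qq(1)]
  show "qq \<cdot> v \<in> hom C (Dom C \<pi>1) Y" "c \<cdot> \<pi>2 \<in> hom C (Dom C \<pi>1) Y" using hs hq by (simp_all add: hom_def)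
  show "(qq \<cdot> v) \<cdot> d = (c \<cdot> \<pi>2) \<cdot> d" using hs hq obs by (simp add: hconj(3) qq(2) dd(3))
  show "(qq \<cdot> v) \<cdot> e = (c \<cdot> \<pi>2) \<cdot> e" using hs hq obs by (simp add: hconj(5) reassoc[OF qq(3)] ee(3))
qed

lemma pq_mono: assumes cm: "is_mono C c" and QY: "is_product C Y Y QY t1 t2"
  and pq: "pq \<in> hom C G QY" "t1 \<cdot> pq = p" "t2 \<cdot> pq = qq"
  shows "is_mono C pq"
proof (rule trivial_kernel_mono[OF pq(1)])
  note yd = prodD[OF QY]
  note hq = homD[OF qq(1)] homD[OF pq(1)] homD[OF yd(2)] homD[OF yd(3)]
  fix W g assume g: "g \<in> hom C W G" "pq \<cdot> g = zr W QY"
  note hg = homD[OF g(1)]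
  have W: "W \<in> Obj C" using g hom_obj by blast
  have "t1 \<cdot> (pq \<cdot> g) = t1 \<cdot> zr W QY" "t2 \<cdot> (pq \<cdot> g) = t2 \<cdot> zr W QY" using g(2) by simp_all
  then have pg: "p \<cdot> g = zr W Y" and qg: "qq \<cdot> g = zr W Y" using hq hg W yd obs
    by (simp_all add: reassoc[OF pq(2)] reassoc[OF pq(3)])
  obtain x where x: "x \<in> hom C W X" "k \<cdot> x = g"
    using kernel_factor[OF split_parts(4)[OF sE], of g W] g(1) pg hs DkX by auto
  note hx = homD[OF x(1)]
  have "c \<cdot> x = zr W Y" using qg hx hq hs by (simp add: x(2)[symmetric] reassoc[OF qq(2)])
  then have "c \<cdot> x = c \<cdot> zr W X" using hs W obs by simp
  then have "x = zr W X" using monoD[OF cm, of x W "zr W X"] x(1) zr_hom[OF W obs(1)] hs by simp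
  then show "g = zr W G" using x(2) hs W obs by simp
qed

end

context main begin

lemma char_mono: assumes ch: "characteristic_mono C c" shows "is_mono C c"
proof -
  obtain a b where ab: "is_kernel C (Id C Y) a" "b \<in> hom C (Cod C a) (Dom C a)" "a \<cdot> b = Id C (Cod C a)"
    using id_protosplit[OF obs(3)] unfolding protosplit_mono_def by blast
  have bn: "bourn_normal C (Id C Y)" by (rule protosplit_bourn[OF ab])
  have H: "\<forall>n. bourn_normal C n \<and> Dom C n = Cod C c \<longrightarrow> bourn_normal C (n \<cdot> c)"
    using ch unfolding characteristic_mono_def by (elim conjE)
  have "bourn_normal C (Id C Y) \<and> Dom C (Id C Y) = Cod C c" using bn hs obs by simp
  from mp[OF spec[OF H, of "Id C Y"] this] have "bourn_normal C (Id C Y \<cdot> c)" .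
  then have "bourn_normal C c" using hs by simp
  then show ?thesis unfolding bourn_normal_def by blast
qed

lemma bn_data: assumes "bourn_normal C n"
  obtains r1 r2 P' p1 p2 mt where "equiv_rel C (Cod C n) r1 r2" "is_product C (Dom C n) (Dom C n) P' p1 p2"
    "mt \<in> hom C P' (Dom C r1)" "r1 \<cdot> mt = n \<cdot> p1" "r2 \<cdot> mt = n \<cdot> p2" "is_pullback C r1 n mt p1" "is_mono C n"
  using assms unfolding bourn_normal_def by blast

lemma dir1_sc: assumes ch: "characteristic_mono C c" shows "strong_complete C Y"
  unfolding strong_complete_def
proof (intro conjI allI impI)
  show "Y \<in> Obj C" using obs by simp
  have cm: "is_mono C c" using char_mono[OF ch] .
  fix m assume mm: "protosplit_mono C m \<and> Dom C m = Y"
  obtain a b where ab: "is_kernel C m a" "b \<in> hom C (Cod C a) (Dom C a)" "a \<cdot> b = Id C (Cod C a)"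
    using mm unfolding protosplit_mono_def by blast
  note kd = kernelD[OF ab(1)]
  define A where "A = Cod C m"
  have mh: "m \<in> hom C Y A" using kd mm A_def by (simp add: hom_def)
  note hm = homD[OF mh]
  have A: "A \<in> Obj C" using mh hom_obj by blast
  have bn: "bourn_normal C m" by (rule protosplit_bourn[OF ab])
  have H: "\<forall>n. bourn_normal C n \<and> Dom C n = Cod C c \<longrightarrow> bourn_normal C (n \<cdot> c)"
    using ch unfolding characteristic_mono_def by (elim conjE)
  have "bourn_normal C m \<and> Dom C m = Cod C c" using bn hs hm by simp
  from mp[OF spec[OF H, of m] this] have bnc: "bourn_normal C (m \<cdot> c)" .
  have mch: "m \<cdot> c \<in> hom C X A" using hm hs by (simp add: hom_def)
  note hmc = homD[OF mch]
  obtain r1 r2 P' p1 p2 mt where bd: "equiv_rel C A r1 r2" "is_product C X X P' p1 p2"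
    "mt \<in> hom C P' (Dom C r1)" "r1 \<cdot> mt = (m \<cdot> c) \<cdot> p1" "r2 \<cdot> mt = (m \<cdot> c) \<cdot> p2" "is_pullback C r1 (m \<cdot> c) mt p1"
    using bn_data[OF bnc] hmc by metis
  note ed = equiv_relD[OF bd(1)]
  define R where "R = Dom C r1"
  have rh: "r1 \<in> hom C R A" "r2 \<in> hom C R A" using ed R_def by simp_all
  note qd = prodD[OF bd(2)]
  note hr = homD[OF rh(1)] homD[OF rh(2)] homD[OF qd(2)] homD[OF qd(3)] homD[OF bd(3)[folded R_def]]
  obtain d' where d': "d' \<in> hom C X P'" "p1 \<cdot> d' = zr X X" "p2 \<cdot> d' = Id C X"
    using prod_factor[OF bd(2) zr_hom[OF obs(1) obs(1)] id_hom[OF obs(1)]] by blast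
  note hd' = homD[OF d'(1)]
  have kR: "is_kernel C (mt \<cdot> d') r1" by (rule bn_kernel[OF bd(1) bd(2) bd(3) bd(4) bd(5) bd(6) mch d'])
  obtain dR where dR: "dR \<in> hom C A R" "r1 \<cdot> dR = Id C A" "r2 \<cdot> dR = Id C A" using ed(4) R_def by blast
  note hdR = homD[OF dR(1)]
  have sR: "split_ext C (mt \<cdot> d') r1 dR" by (rule splitI[OF rh(1) dR(1) dR(2) kR])
  have DkR: "Dom C (mt \<cdot> d') = X" using hr hd' by simp
  obtain VR \<rho> where mr: "split_ext_mor C (mt \<cdot> d') r1 dR k p i VR \<rho>" using gen_classify[OF sR DkR] by blast
  have rhoh: "\<rho> \<in> hom C A Y" using morD(2)[OF mr] hr hs by simp
  note hrho = homD[OF rhoh]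
  have r1k: "r1 \<cdot> (mt \<cdot> d') = zr X A" using hr hd' hs hm obs A by (simp add: reassoc[OF bd(4)] d'(2))
  have r2k: "r2 \<cdot> (mt \<cdot> d') = m \<cdot> c" using hr hd' hs hm obs A by (simp add: reassoc[OF bd(5)] d'(3))
    obtain QA t1 t2 where QA: "is_product C A A QA t1 t2" using prod_exists[OF A A] by blast
  note qa = prodD[OF QA]
  note hqa = homD[OF qa(2)] homD[OF qa(3)]
  obtain mu where mu: "mu \<in> hom C R QA" "t1 \<cdot> mu = r1" "t2 \<cdot> mu = r2" using prod_factor[OF QA rh] by blast
  note hmu = homD[OF mu(1)]
  have mum: "is_mono C mu" by (rule jm_pair_mono[OF ed(3) rh QA mu])
  note hq = homD[OF qq(1)]
  have fh: "m \<cdot> p \<in> hom C G A" "m \<cdot> qq \<in> hom C G A" using hm hs hq by (simp_all add: hom_def)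
  obtain f where f: "f \<in> hom C G QA" "t1 \<cdot> f = m \<cdot> p" "t2 \<cdot> f = m \<cdot> qq" using prod_factor[OF QA fh] by blast
  note hf = homD[OF f(1)]
  have "\<exists>h \<in> hom C (Dom C p) R. mu \<cdot> h = f"
  proof (rule split_factor[OF sE mum mu(1)])
    show "f \<in> hom C (Dom C p) QA" using f hs by simp
    show "mt \<cdot> d' \<in> hom C (Dom C k) R" "dR \<cdot> m \<in> hom C (Cod C p) R" using hr hd' hdR hm hs DkX by (simp_all add: hom_def)
    show "mu \<cdot> mt \<cdot> d' = f \<cdot> k"
    proof (rule prod_unique[OF QA, of _ X])
      show "mu \<cdot> mt \<cdot> d' \<in> hom C X QA" "f \<cdot> k \<in> hom C X QA" using hmu hr hd' hf hs by (simp_all add: hom_def)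
      show "t1 \<cdot> mu \<cdot> mt \<cdot> d' = t1 \<cdot> f \<cdot> k" using hmu hr hd' hf hs hqa hm obs A
        by (simp add: reassoc[OF mu(2)] reassoc[OF f(2)] r1k hE(5))
      show "t2 \<cdot> mu \<cdot> mt \<cdot> d' = t2 \<cdot> f \<cdot> k" using hmu hr hd' hf hs hqa hm hq
        by (simp add: reassoc[OF mu(3)] reassoc[OF f(3)] r2k qq(2))
    qed
    show "mu \<cdot> dR \<cdot> m = f \<cdot> i"
    proof (rule prod_unique[OF QA, of _ Y])
      show "mu \<cdot> dR \<cdot> m \<in> hom C Y QA" "f \<cdot> i \<in> hom C Y QA" using hmu hdR hm hf hs by (simp_all add: hom_def)
      show "t1 \<cdot> mu \<cdot> dR \<cdot> m = t1 \<cdot> f \<cdot> i" using hmu hdR hm hf hs hqa hr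
        by (simp add: reassoc[OF mu(2)] reassoc[OF f(2)] reassoc[OF dR(2)] hE(4))
      show "t2 \<cdot> mu \<cdot> dR \<cdot> m = t2 \<cdot> f \<cdot> i" using hmu hdR hm hf hs hqa hr hq
        by (simp add: reassoc[OF mu(3)] reassoc[OF f(3)] reassoc[OF dR(3)] qq(3))
    qed
  qed
  then obtain v' where v': "v' \<in> hom C G R" "mu \<cdot> v' = f" using hs by auto
  note hv' = homD[OF v'(1)]
  have "t1 \<cdot> (mu \<cdot> v') = m \<cdot> p" "t2 \<cdot> (mu \<cdot> v') = m \<cdot> qq" using v'(2) f by simp_all
  then have v'12: "r1 \<cdot> v' = m \<cdot> p" "r2 \<cdot> v' = m \<cdot> qq" using hv' hmu hqa by (simp_all add: reassoc[OF mu(2)] reassoc[OF mu(3)])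
  have mv': "split_ext_mor C k p i (mt \<cdot> d') r1 dR v' m"
  proof (rule morI)
    show "v' \<in> hom C (Dom C p) (Dom C r1)" "m \<in> hom C (Cod C p) (Cod C r1)" using v'(1) hs hr mh by simp_all
    show "v' \<cdot> k = mt \<cdot> d'"
    proof (rule jmD[OF ed(3), of _ X])
      show "v' \<cdot> k \<in> hom C X (Dom C r1)" "mt \<cdot> d' \<in> hom C X (Dom C r1)" using hv' hs hr hd' by (simp_all add: hom_def)
      show "r1 \<cdot> v' \<cdot> k = r1 \<cdot> mt \<cdot> d'" using hv' hs hr hm obs A by (simp add: reassoc[OF v'12(1)] hE(5) r1k[simplified])
      show "r2 \<cdot> v' \<cdot> k = r2 \<cdot> mt \<cdot> d'" using hv' hs hr hm hq hd' by (simp add: reassoc[OF v'12(2)] qq(2) r2k[simplified])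
    qed
    show "r1 \<cdot> v' = m \<cdot> p" by (rule v'12(1))
    show "v' \<cdot> i = dR \<cdot> m"
    proof (rule jmD[OF ed(3), of _ Y])
      show "v' \<cdot> i \<in> hom C Y (Dom C r1)" "dR \<cdot> m \<in> hom C Y (Dom C r1)" using hv' hs hr hdR hm by (simp_all add: hom_def)
      show "r1 \<cdot> v' \<cdot> i = r1 \<cdot> dR \<cdot> m" using hv' hs hr hm hdR by (simp add: reassoc[OF v'12(1)] reassoc[OF dR(2)] hE(4))
      show "r2 \<cdot> v' \<cdot> i = r2 \<cdot> dR \<cdot> m" using hv' hs hr hm hdR hq by (simp add: reassoc[OF v'12(2)] reassoc[OF dR(3)] qq(3))
    qed
  qed
  have m2: "split_ext_mor C k p i k p i (VR \<cdot> v') (\<rho> \<cdot> m)" by (rule mor_comp[OF sE sR sE mv' mr])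
  have rhom: "\<rho> \<cdot> m = Id C Y" using gen_uniq[OF sE DkX m2 mor_id[OF sE]] hs by simp
    obtain QY t1' t2' where QY: "is_product C Y Y QY t1' t2'" using prod_exists[OF obs(3) obs(3)] by blast
  note qy = prodD[OF QY]
  note hqy = homD[OF qy(2)] homD[OF qy(3)]
  obtain pq where pq: "pq \<in> hom C G QY" "t1' \<cdot> pq = p" "t2' \<cdot> pq = qq" using prod_factor[OF QY hE(2) qq(1)] by blast
  note hpq = homD[OF pq(1)]
  have pqm: "is_mono C pq" by (rule pq_mono[OF cm QY pq])
  have uniq: "r = \<rho>" if r: "r \<in> hom C A Y" "r \<cdot> m = Id C Y" for r
  proof -
    note hrr = homD[OF r(1)]
    have gh: "r \<cdot> r1 \<in> hom C R Y" "r \<cdot> r2 \<in> hom C R Y" using hrr hr by (simp_all add: hom_def)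
    obtain g where g: "g \<in> hom C R QY" "t1' \<cdot> g = r \<cdot> r1" "t2' \<cdot> g = r \<cdot> r2" using prod_factor[OF QY gh] by blast
    note hg = homD[OF g(1)]
    have eqk: "pq \<cdot> k = g \<cdot> (mt \<cdot> d')"
    proof (rule prod_unique[OF QY, of _ X])
      show "pq \<cdot> k \<in> hom C X QY" "g \<cdot> (mt \<cdot> d') \<in> hom C X QY" using hpq hs hg hr hd' by (simp_all add: hom_def)
      show "t1' \<cdot> pq \<cdot> k = t1' \<cdot> g \<cdot> (mt \<cdot> d')" using hpq hs hg hr hd' hqy hrr obs A
        by (simp add: reassoc[OF pq(2)] reassoc[OF g(2)] hE(5) r1k[simplified])
      show "t2' \<cdot> pq \<cdot> k = t2' \<cdot> g \<cdot> (mt \<cdot> d')" using hpq hs hg hr hd' hqy hrr hm hq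
        by (simp add: reassoc[OF pq(3)] reassoc[OF g(3)] qq(2) r2k[simplified] reassoc[OF r(2)])
    qed
    have eqi: "pq \<cdot> (i \<cdot> r) = g \<cdot> dR"
    proof (rule prod_unique[OF QY, of _ A])
      show "pq \<cdot> (i \<cdot> r) \<in> hom C A QY" "g \<cdot> dR \<in> hom C A QY" using hpq hs hg hdR hrr by (simp_all add: hom_def)
      show "t1' \<cdot> pq \<cdot> (i \<cdot> r) = t1' \<cdot> g \<cdot> dR" using hpq hs hg hdR hqy hrr hr
        by (simp add: reassoc[OF pq(2)] reassoc[OF g(2)] reassoc[OF hE(4)] dR(2))
      show "t2' \<cdot> pq \<cdot> (i \<cdot> r) = t2' \<cdot> g \<cdot> dR" using hpq hs hg hdR hqy hrr hr hq
        by (simp add: reassoc[OF pq(3)] reassoc[OF g(3)] reassoc[OF qq(3)] dR(3))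
    qed
    have "\<exists>h \<in> hom C (Dom C r1) G. pq \<cdot> h = g"
    proof (rule split_factor[OF sR pqm pq(1)])
      show "g \<in> hom C (Dom C r1) QY" using g R_def by simp
      show "k \<in> hom C (Dom C (mt \<cdot> d')) G" "i \<cdot> r \<in> hom C (Cod C r1) G" using hs hr hd' hrr DkR by (simp_all add: hom_def)
      show "pq \<cdot> k = g \<cdot> mt \<cdot> d'" using eqk .
      show "pq \<cdot> i \<cdot> r = g \<cdot> dR" using eqi .
    qed
    then obtain Vr where Vr: "Vr \<in> hom C R G" "pq \<cdot> Vr = g" using R_def by auto
    note hV = homD[OF Vr(1)]
    have "t1' \<cdot> (pq \<cdot> Vr) = r \<cdot> r1" using Vr(2) g(2) by simp
    then have pV: "p \<cdot> Vr = r \<cdot> r1" using hV hpq hqy by (simp add: reassoc[OF pq(2)])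
    have mV: "split_ext_mor C (mt \<cdot> d') r1 dR k p i Vr r"
    proof (rule morI)
      show "Vr \<in> hom C (Dom C r1) (Dom C p)" "r \<in> hom C (Cod C r1) (Cod C p)" using Vr(1) r(1) hr hs by simp_all
      show "Vr \<cdot> (mt \<cdot> d') = k"
        apply (rule monoD[OF pqm, of _ X])
        using hV hr hd' hs hpq eqk by (simp_all add: hom_def reassoc[OF Vr(2)])
      show "p \<cdot> Vr = r \<cdot> r1" by (rule pV)
      show "Vr \<cdot> dR = i \<cdot> r"
        apply (rule monoD[OF pqm, of _ A])
        using hV hdR hs hpq hrr eqi by (simp_all add: hom_def reassoc[OF Vr(2)])
    qed
    show "r = \<rho>" using gen_uniq[OF sR DkR mV mr] .
  qed
  show "\<exists>!r. r \<in> hom C (Cod C m) Y \<and> r \<cdot> m = Id C Y"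
  proof (rule ex1I[of _ \<rho>])
    show "\<rho> \<in> hom C (Cod C m) Y \<and> \<rho> \<cdot> m = Id C Y" using rhoh rhom A_def by simp
    fix r assume "r \<in> hom C (Cod C m) Y \<and> r \<cdot> m = Id C Y"
    then show "r = \<rho>" using uniq A_def by simp
  qed
qed

end

context pcat begin

lemma sc_retr: assumes sc: "strong_complete C Y" and ps: "protosplit_mono C m" "Dom C m = Y"
  shows "\<exists>!r. r \<in> hom C (Cod C m) Y \<and> r \<cdot> m = Id C Y"
proof -
  have H: "\<forall>m. protosplit_mono C m \<and> Dom C m = Y \<longrightarrow> (\<exists>!r. r \<in> hom C (Cod C m) Y \<and> r \<cdot> m = Id C Y)"
    using sc unfolding strong_complete_def by (elim conjE)
  have "protosplit_mono C m \<and> Dom C m = Y" using ps by simp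
  then show ?thesis using mp[OF spec[OF H, of m]] by blast
qed

lemma protosplitI: "is_kernel C m a \<Longrightarrow> b \<in> hom C (Cod C a) (Dom C a) \<Longrightarrow> a \<cdot> b = Id C (Cod C a) \<Longrightarrow> protosplit_mono C m"
  unfolding protosplit_mono_def by blast

lemma sc_generic: assumes sc: "strong_complete C Y" shows "\<exists>k' p' i'. generic_split_ext C Y k' p' i'"
proof -
  have Y: "Y \<in> Obj C" using sc unfolding strong_complete_def by blast
  obtain Q t1 t2 where Q: "is_product C Y Y Q t1 t2" using prod_exists[OF Y Y] by blast
  note qd = prodD[OF Q]
  note hq = homD[OF qd(2)] homD[OF qd(3)]
  obtain k0 where k0: "k0 \<in> hom C Y Q" "t1 \<cdot> k0 = zr Y Y" "t2 \<cdot> k0 = Id C Y"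
    using prod_factor[OF Q zr_hom[OF Y Y] id_hom[OF Y]] by blast
  obtain dg where dg: "dg \<in> hom C Y Q" "t1 \<cdot> dg = Id C Y" "t2 \<cdot> dg = Id C Y"
    using prod_factor[OF Q id_hom[OF Y] id_hom[OF Y]] by blast
  note hk = homD[OF k0(1)] homD[OF dg(1)]
  have s0: "split_ext C k0 t1 dg" by (rule prod_split[OF Q k0 dg(1,2)])
  have "generic_split_ext C Y k0 t1 dg" unfolding generic_split_ext_def
  proof (intro conjI allI impI)
    show "split_ext C k0 t1 dg" "Dom C k0 = Y" using s0 hk by simp_all
    fix \<kappa> \<alpha> \<beta> assume a: "split_ext C \<kappa> \<alpha> \<beta> \<and> Dom C \<kappa> = Y"
    then have s: "split_ext C \<kappa> \<alpha> \<beta>" and DY: "Dom C \<kappa> = Y" by simp_all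
    note sp = split_parts[OF s]
    define A where "A = Dom C \<alpha>"
    define B where "B = Cod C \<alpha>"
    note defs = A_def[symmetric] B_def[symmetric]
    have ah: "\<alpha> \<in> hom C A B" "\<beta> \<in> hom C B A" "\<kappa> \<in> hom C Y A" using sp DY unfolding defs by simp_all
    note ha = homD[OF ah(1)] homD[OF ah(2)] homD[OF ah(3)]
    have ob: "A \<in> Obj C" "B \<in> Obj C" using ah hom_obj by blast+
    have ak: "\<alpha> \<cdot> \<kappa> = zr Y B" using sp DY unfolding defs by simp
    have ab: "\<alpha> \<cdot> \<beta> = Id C B" using sp unfolding defs by simp
    have ps: "protosplit_mono C \<kappa>" by (rule protosplitI[OF sp(4) sp(2) sp(3)])
    obtain r where r: "r \<in> hom C A Y" "r \<cdot> \<kappa> = Id C Y" using ex1_implies_ex[OF sc_retr[OF sc ps DY]] ha by auto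
    have runi: "r' = r" if "r' \<in> hom C A Y" "r' \<cdot> \<kappa> = Id C Y" for r'
      by (rule ex1_uniq[OF sc_retr[OF sc ps DY]]) (use that r ha in simp_all)
    note hr = homD[OF r(1)]
    have f1: "r \<cdot> (\<beta> \<cdot> \<alpha>) \<in> hom C A Y" using hr ha by (simp add: hom_def)
    obtain v0 where v0: "v0 \<in> hom C A Q" "t1 \<cdot> v0 = r \<cdot> (\<beta> \<cdot> \<alpha>)" "t2 \<cdot> v0 = r" using prod_factor[OF Q f1 r(1)] by blast
    note hv = homD[OF v0(1)]
    have m0: "split_ext_mor C \<kappa> \<alpha> \<beta> k0 t1 dg v0 (r \<cdot> \<beta>)"
    proof (rule morI)
      show "v0 \<in> hom C (Dom C \<alpha>) (Dom C t1)" "r \<cdot> \<beta> \<in> hom C (Cod C \<alpha>) (Cod C t1)" using v0(1) hq hr ha unfolding defs by (simp_all add: hom_def)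
      show "v0 \<cdot> \<kappa> = k0"
      proof (rule prod_unique[OF Q, of _ Y])
        show "v0 \<cdot> \<kappa> \<in> hom C Y Q" "k0 \<in> hom C Y Q" using hv ha k0(1) by (simp_all add: hom_def)
        show "t1 \<cdot> v0 \<cdot> \<kappa> = t1 \<cdot> k0" using hv ha hq hr ob Y by (simp add: reassoc[OF v0(2)] ak k0(2))
        show "t2 \<cdot> v0 \<cdot> \<kappa> = t2 \<cdot> k0" using hv ha hq hr by (simp add: reassoc[OF v0(3)] r(2) k0(3))
      qed
      show "t1 \<cdot> v0 = (r \<cdot> \<beta>) \<cdot> \<alpha>" using v0(2) hr ha by simp
      show "v0 \<cdot> \<beta> = dg \<cdot> r \<cdot> \<beta>"
      proof (rule prod_unique[OF Q, of _ B])
        show "v0 \<cdot> \<beta> \<in> hom C B Q" "dg \<cdot> r \<cdot> \<beta> \<in> hom C B Q" using hv ha hk hr by (simp_all add: hom_def)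
        show "t1 \<cdot> v0 \<cdot> \<beta> = t1 \<cdot> dg \<cdot> r \<cdot> \<beta>" using hv ha hq hr hk by (simp add: reassoc[OF v0(2)] reassoc[OF dg(2)] ab)
        show "t2 \<cdot> v0 \<cdot> \<beta> = t2 \<cdot> dg \<cdot> r \<cdot> \<beta>" using hv ha hq hr hk by (simp add: reassoc[OF v0(3)] reassoc[OF dg(3)])
      qed
    qed
    show "\<exists>!vw. split_ext_mor C \<kappa> \<alpha> \<beta> k0 t1 dg (fst vw) (snd vw)"
    proof (rule ex1I[of _ "(v0, r \<cdot> \<beta>)"])
      show "split_ext_mor C \<kappa> \<alpha> \<beta> k0 t1 dg (fst (v0, r \<cdot> \<beta>)) (snd (v0, r \<cdot> \<beta>))" using m0 by simp
      fix vw assume "split_ext_mor C \<kappa> \<alpha> \<beta> k0 t1 dg (fst vw) (snd vw)"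
      note md = morD[OF this]
      define v' where "v' = fst vw"
      define w' where "w' = snd vw"
      have vh: "v' \<in> hom C A Q" "w' \<in> hom C B Y" using md hq unfolding v'_def w'_def defs by simp_all
      note hv' = homD[OF vh(1)] homD[OF vh(2)]
      have e1: "v' \<cdot> \<kappa> = k0" "t1 \<cdot> v' = w' \<cdot> \<alpha>" "v' \<cdot> \<beta> = dg \<cdot> w'" using md unfolding v'_def w'_def by simp_all
      have t2v: "t2 \<cdot> v' = r"
      proof (rule runi)
        show "t2 \<cdot> v' \<in> hom C A Y" using hv' hq by (simp add: hom_def)
        show "(t2 \<cdot> v') \<cdot> \<kappa> = Id C Y" using hv' hq ha by (simp add: e1(1) k0(3))
      qed
      have "t2 \<cdot> (v' \<cdot> \<beta>) = t2 \<cdot> (dg \<cdot> w')" using e1(3) by simp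
      then have w'r: "w' = r \<cdot> \<beta>" using hv' hq ha hk by (simp add: reassoc[OF t2v] reassoc[OF dg(3)])
      have "v' = v0"
      proof (rule prod_unique[OF Q vh(1) v0(1)])
        show "t1 \<cdot> v' = t1 \<cdot> v0" using e1(2) v0(2) w'r hr ha by simp
        show "t2 \<cdot> v' = t2 \<cdot> v0" using t2v v0(3) by simp
      qed
      then show "vw = (v0, r \<cdot> \<beta>)" using w'r unfolding v'_def w'_def by (cases vw) simp
    qed
  qed
  then show ?thesis by blast
qed

end

context main begin

lemma dir2_char: assumes tc: "trivial_center C X" and sc: "strong_complete C Y"
  shows "characteristic_mono C c"
  unfolding characteristic_mono_def
proof (intro conjI allI impI)
  show "c \<in> Arr C" using hs by simp
  have cm: "is_mono C c" using center_mono[OF tc] .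
  fix n assume nn: "bourn_normal C n \<and> Dom C n = Cod C c"
  then have bn: "bourn_normal C n" and Dn: "Dom C n = Y" using hs by simp_all
  define Z where "Z = Cod C n"
  obtain r1 r2 PY p1 p2 mt where bd: "equiv_rel C Z r1 r2" "is_product C Y Y PY p1 p2"
    "mt \<in> hom C PY (Dom C r1)" "r1 \<cdot> mt = n \<cdot> p1" "r2 \<cdot> mt = n \<cdot> p2" "is_pullback C r1 n mt p1" "is_mono C n"
    using bn_data[OF bn] Dn Z_def by metis
  note ed = equiv_relD[OF bd(1)]
  define R where "R = Dom C r1"
  have rh: "r1 \<in> hom C R Z" "r2 \<in> hom C R Z" using ed R_def by simp_all
  have nh: "n \<in> hom C Y Z" using mono_arr[OF bd(7)] Dn Z_def by (simp add: hom_def)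
  note qd = prodD[OF bd(2)]
  note hr = homD[OF rh(1)] homD[OF rh(2)] homD[OF qd(2)] homD[OF qd(3)] homD[OF bd(3)[folded R_def]] homD[OF nh]
  have ob: "Z \<in> Obj C" "R \<in> Obj C" "PY \<in> Obj C" using rh qd hom_obj by blast+
  obtain d' where d': "d' \<in> hom C Y PY" "p1 \<cdot> d' = zr Y Y" "p2 \<cdot> d' = Id C Y"
    using prod_factor[OF bd(2) zr_hom[OF obs(3) obs(3)] id_hom[OF obs(3)]] by blast
  obtain dg where dg: "dg \<in> hom C Y PY" "p1 \<cdot> dg = Id C Y" "p2 \<cdot> dg = Id C Y"
    using prod_factor[OF bd(2) id_hom[OF obs(3)] id_hom[OF obs(3)]] by blast
  note hd = homD[OF d'(1)] homD[OF dg(1)]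
  have kR: "is_kernel C (mt \<cdot> d') r1" by (rule bn_kernel[OF bd(1) bd(2) bd(3) bd(4) bd(5) bd(6) nh d'])
  obtain dR where dR: "dR \<in> hom C Z R" "r1 \<cdot> dR = Id C Z" "r2 \<cdot> dR = Id C Z" using ed(4) R_def by blast
  note hdR = homD[OF dR(1)]
  have psk: "protosplit_mono C (mt \<cdot> d')" by (rule protosplitI[OF kR]) (use dR hr in \<open>simp_all add: hom_def\<close>)
  have DkY: "Dom C (mt \<cdot> d') = Y" using hr hd by simp
  obtain \<rho> where rho: "\<rho> \<in> hom C R Y" "\<rho> \<cdot> (mt \<cdot> d') = Id C Y"
    using ex1_implies_ex[OF sc_retr[OF sc psk DkY]] hr hd by auto
  note hrho = homD[OF rho(1)]
    have psd: "protosplit_mono C d'" by (rule protosplitI[OF prod_kernel[OF bd(2) d']]) (use dg hr in \<open>simp_all add: hom_def\<close>)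
  have Dd: "Dom C d' = Y" using hd by simp
  have rmt: "\<rho> \<cdot> mt = p2"
  proof (rule ex1_uniq[OF sc_retr[OF sc psd Dd]])
    show "\<rho> \<cdot> mt \<in> hom C (Cod C d') Y \<and> (\<rho> \<cdot> mt) \<cdot> d' = Id C Y" using hrho hr hd rho(2) by (simp add: hom_def)
    show "p2 \<in> hom C (Cod C d') Y \<and> p2 \<cdot> d' = Id C Y" using qd hd d'(3) by simp
  qed
  have mtdg: "mt \<cdot> dg = dR \<cdot> n"
  proof (rule jmD[OF ed(3), of _ Y])
    show "mt \<cdot> dg \<in> hom C Y (Dom C r1)" "dR \<cdot> n \<in> hom C Y (Dom C r1)" using hr hd hdR by (simp_all add: hom_def)
    show "r1 \<cdot> mt \<cdot> dg = r1 \<cdot> dR \<cdot> n" using hr hd hdR by (simp add: reassoc[OF bd(4)] dg(2) reassoc[OF dR(2)])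
    show "r2 \<cdot> mt \<cdot> dg = r2 \<cdot> dR \<cdot> n" using hr hd hdR by (simp add: reassoc[OF bd(5)] dg(3) reassoc[OF dR(3)])
  qed
  have rdn: "\<rho> \<cdot> (dR \<cdot> n) = Id C Y" using hr hd hdR hrho by (simp add: mtdg[symmetric] reassoc[OF rmt] dg(3))
    obtain QY t1 t2 where QY: "is_product C Y Y QY t1 t2" using prod_exists[OF obs(3) obs(3)] by blast
  note qy = prodD[OF QY]
  note hq = homD[OF qy(2)] homD[OF qy(3)] homD[OF qq(1)]
  obtain pq where pq: "pq \<in> hom C G QY" "t1 \<cdot> pq = p" "t2 \<cdot> pq = qq" using prod_factor[OF QY hE(2) qq(1)] by blast
  note hpq = homD[OF pq(1)]
  have pqm: "is_mono C pq" by (rule pq_mono[OF cm QY pq])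
  have vrh: "\<rho> \<cdot> (dR \<cdot> r1) \<in> hom C R Y" using hrho hdR hr by (simp add: hom_def)
  obtain VR where VR: "VR \<in> hom C R QY" "t1 \<cdot> VR = \<rho> \<cdot> (dR \<cdot> r1)" "t2 \<cdot> VR = \<rho>" using prod_factor[OF QY vrh rho(1)] by blast
  note hV = homD[OF VR(1)]
  obtain S s1 s2 where Sp: "is_pullback C VR pq s1 s2" "s1 \<in> hom C S R" "s2 \<in> hom C S G"
    using pb_exists[OF VR(1) pq(1)] by blast
  note sd = pbD[OF Sp(1)]
  note hS = homD[OF Sp(2)] homD[OF Sp(3)]
  have s1m: "is_mono C s1" by (rule pb_mono[OF Sp(1) pqm])
  have Sh: "r1 \<cdot> s1 \<in> hom C S Z" "r2 \<cdot> s1 \<in> hom C S Z" using hr hS by (simp_all add: hom_def)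
  note hSh = homD[OF Sh(1)] homD[OF Sh(2)]
  have jS: "jm C (r1 \<cdot> s1) (r2 \<cdot> s1)"
  proof (rule jmI)
    fix W x y assume x: "x \<in> hom C W (Dom C (r1 \<cdot> s1))" and y: "y \<in> hom C W (Dom C (r1 \<cdot> s1))"
      and e1: "(r1 \<cdot> s1) \<cdot> x = (r1 \<cdot> s1) \<cdot> y" and e2: "(r2 \<cdot> s1) \<cdot> x = (r2 \<cdot> s1) \<cdot> y"
    note hx = homD[OF x] homD[OF y]
    have "s1 \<cdot> x = s1 \<cdot> y"
      apply (rule jmD[OF ed(3), of _ W]) using hx hS hr e1 e2 by (simp_all add: hom_def)
    then show "x = y" using monoD[OF s1m, of x W y] hx hS hr by (simp add: hom_def)
  qed
  have eqd: "VR \<cdot> dR = pq \<cdot> (i \<cdot> (\<rho> \<cdot> dR))"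
  proof (rule prod_unique[OF QY, of _ Z])
    show "VR \<cdot> dR \<in> hom C Z QY" "pq \<cdot> (i \<cdot> (\<rho> \<cdot> dR)) \<in> hom C Z QY" using hV hdR hpq hs hrho by (simp_all add: hom_def)
    show "t1 \<cdot> VR \<cdot> dR = t1 \<cdot> pq \<cdot> i \<cdot> \<rho> \<cdot> dR" using hV hdR hpq hs hrho hq hr ob
      by (simp add: reassoc[OF VR(2)] reassoc[OF pq(2)] reassoc[OF hE(4)] reassoc[OF dR(2)] dR(2))
    show "t2 \<cdot> VR \<cdot> dR = t2 \<cdot> pq \<cdot> i \<cdot> \<rho> \<cdot> dR" using hV hdR hpq hs hrho hq hr ob
      by (simp add: reassoc[OF VR(3)] reassoc[OF pq(3)] reassoc[OF qq(3)])
  qed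
  obtain dS where dS: "dS \<in> hom C Z S" "s1 \<cdot> dS = dR" "s2 \<cdot> dS = i \<cdot> (\<rho> \<cdot> dR)"
    using pb_factor[OF Sp(1) _ _ eqd, of Z] dR(1) hV hpq hs hrho hdR hS by (auto simp: hom_def)
  note hdS = homD[OF dS(1)]
  have eS: "equiv_rel C Z (r1 \<cdot> s1) (r2 \<cdot> s1)"
  proof (rule reflexive_equiv[OF Sh jS dS(1)])
    show "(r1 \<cdot> s1) \<cdot> dS = Id C Z" "(r2 \<cdot> s1) \<cdot> dS = Id C Z" using hr hS hdS by (simp_all add: dS(2) dR(2,3))
  qed
    have cp: "c \<cdot> \<pi>1 \<in> hom C P Y" "c \<cdot> \<pi>2 \<in> hom C P Y" using hs by (simp_all add: hom_def)
  obtain cc where cc: "cc \<in> hom C P PY" "p1 \<cdot> cc = c \<cdot> \<pi>1" "p2 \<cdot> cc = c \<cdot> \<pi>2" using prod_factor[OF bd(2) cp] by blast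
  note hcc = homD[OF cc(1)]
  have eqs: "VR \<cdot> (mt \<cdot> cc) = pq \<cdot> v"
  proof (rule prod_unique[OF QY, of _ P])
    show "VR \<cdot> (mt \<cdot> cc) \<in> hom C P QY" "pq \<cdot> v \<in> hom C P QY" using hV hr hcc hpq hs by (simp_all add: hom_def)
    show "t1 \<cdot> VR \<cdot> mt \<cdot> cc = t1 \<cdot> pq \<cdot> v" using hV hr hcc hpq hs hrho hdR hq
      by (simp add: reassoc[OF VR(2)] reassoc[OF pq(2)] reassoc[OF bd(4)] reassoc[OF cc(2)] cc(2) reassoc3[OF rdn] hconj(4))
    show "t2 \<cdot> VR \<cdot> mt \<cdot> cc = t2 \<cdot> pq \<cdot> v" using hV hr hcc hpq hs hrho hq
      by (simp add: reassoc[OF VR(3)] reassoc[OF pq(3)] reassoc[OF rmt] cc(3) qv)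
  qed
  have mcc: "mt \<cdot> cc \<in> hom C P R" using hr hcc by (simp add: hom_def)
  obtain st where st: "st \<in> hom C P S" "s1 \<cdot> st = mt \<cdot> cc" "s2 \<cdot> st = v"
    using pb_factor[OF Sp(1) _ _ eqs, of P] mcc hconj(1) hV hpq hS by (auto simp: hom_def)
  note hst = homD[OF st(1)]
  have nch: "n \<cdot> c \<in> hom C X Z" using hr hs by (simp add: hom_def)
  note hnc = homD[OF nch]
  have st1: "(r1 \<cdot> s1) \<cdot> st = (n \<cdot> c) \<cdot> \<pi>1" using hr hS hst hcc hs by (simp add: st(2) reassoc[OF bd(4)] cc(2))
  have st2: "(r2 \<cdot> s1) \<cdot> st = (n \<cdot> c) \<cdot> \<pi>2" using hr hS hst hcc hs by (simp add: st(2) reassoc[OF bd(5)] cc(3))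
  have stpb: "is_pullback C (r1 \<cdot> s1) (n \<cdot> c) st \<pi>1"
  proof (rule pbI[OF Sh(1) nch st(1) hP(1) st1])
    fix W x y assume x: "x \<in> hom C W S" and y: "y \<in> hom C W X" and e: "(r1 \<cdot> s1) \<cdot> x = (n \<cdot> c) \<cdot> y"
    note hx = homD[OF x] homD[OF y]
    have W: "W \<in> Obj C" using x hom_obj by blast
    have e': "r1 \<cdot> (s1 \<cdot> x) = n \<cdot> (c \<cdot> y)" using e hx hr hS hs by simp
    obtain h1 where h1: "h1 \<in> hom C W PY" "mt \<cdot> h1 = s1 \<cdot> x" "p1 \<cdot> h1 = c \<cdot> y"
      using pb_factor[OF bd(6) _ _ e', of W] hx hr hS hs by (auto simp: hom_def)
    note hh1 = homD[OF h1(1)]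
    have "t1 \<cdot> (pq \<cdot> (s2 \<cdot> x)) = t1 \<cdot> (VR \<cdot> (s1 \<cdot> x))" using hx hS hpq hV by (simp add: reassoc[OF sd(3)[symmetric]])
    then have ps2: "p \<cdot> (s2 \<cdot> x) = c \<cdot> y" using hx hS hpq hV hq hr hdR hrho hs e'
      by (simp add: reassoc[OF pq(2)] reassoc[OF VR(2)] reassoc3[OF rdn])
    have "t2 \<cdot> (pq \<cdot> (s2 \<cdot> x)) = t2 \<cdot> (VR \<cdot> (s1 \<cdot> x))" using hx hS hpq hV by (simp add: reassoc[OF sd(3)[symmetric]])
    then have qs2: "qq \<cdot> (s2 \<cdot> x) = p2 \<cdot> h1" using hx hS hpq hV hq hr hrho hh1
      by (simp add: reassoc[OF pq(3)] reassoc[OF VR(3)] h1(2)[symmetric] reassoc[OF rmt])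
    have s2x: "s2 \<cdot> x \<in> hom C W G" using hx hS by (simp add: hom_def)
    obtain h2 where h2: "h2 \<in> hom C W P" "v \<cdot> h2 = s2 \<cdot> x" "\<pi>1 \<cdot> h2 = y"
      using pb_factor[OF conj_pb _ _ ps2, of W] s2x y hs by (auto simp: hom_def)
    note hh2 = homD[OF h2(1)]
    have cch: "cc \<cdot> h2 = h1"
    proof (rule prod_unique[OF bd(2), of _ W])
      show "cc \<cdot> h2 \<in> hom C W PY" "h1 \<in> hom C W PY" using hcc hh2 h1(1) by (simp_all add: hom_def)
      show "p1 \<cdot> cc \<cdot> h2 = p1 \<cdot> h1" using hcc hh2 hr hs by (simp add: reassoc[OF cc(2)] h2(3) h1(3))
      show "p2 \<cdot> cc \<cdot> h2 = p2 \<cdot> h1" using hcc hh2 hr hs hq by (simp add: reassoc[OF cc(3)] reassoc[OF qv[symmetric]] h2(2) qs2)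
    qed
    have "st \<cdot> h2 = x"
    proof (rule pb_unique[OF Sp(1), of _ W])
      show "st \<cdot> h2 \<in> hom C W (Dom C s1)" "x \<in> hom C W (Dom C s1)" using hst hh2 hx hS by (simp_all add: hom_def)
      show "s1 \<cdot> st \<cdot> h2 = s1 \<cdot> x" using hst hh2 hS hr hcc by (simp add: reassoc[OF st(2)] cch h1(2))
      show "s2 \<cdot> st \<cdot> h2 = s2 \<cdot> x" using hst hh2 hS hs by (simp add: reassoc[OF st(3)] h2(2))
    qed
    then show "\<exists>h\<in>hom C W P. st \<cdot> h = x \<and> \<pi>1 \<cdot> h = y" using h2 by blast
  next
    fix W h h' assume h: "h \<in> hom C W P" and h': "h' \<in> hom C W P" and e1: "st \<cdot> h = st \<cdot> h'" and e2: "\<pi>1 \<cdot> h = \<pi>1 \<cdot> h'"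
    note hh = homD[OF h] homD[OF h']
    have "s2 \<cdot> (st \<cdot> h) = s2 \<cdot> (st \<cdot> h')" using e1 by simp
    then have "v \<cdot> h = v \<cdot> h'" using hh hst hS by (simp add: reassoc[OF st(3)])
    then show "h = h'" using pb_unique[OF conj_pb, of h W h'] h h' e2 hs by (simp add: hom_def)
  qed
  have ncm: "is_mono C (n \<cdot> c)" by (rule mono_comp[OF cm bd(7)]) (use hs hr in simp)
  show "bourn_normal C (n \<cdot> c)" unfolding bourn_normal_def
    apply (rule conjI[OF ncm])
    apply (rule exI[of _ "r1 \<cdot> s1"], rule exI[of _ "r2 \<cdot> s1"], rule exI[of _ P], rule exI[of _ \<pi>1], rule exI[of _ \<pi>2], rule exI[of _ st])
    using eS prodP st(1) st1 st2 stpb hnc hSh hs Z_def by (simp add: hom_def)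
qed

end

theorem theorem5p5:
  fixes C :: "('o, 'm) cat" and X :: 'o and k p i c :: 'm
  assumes "category C" and "pointed C" and "finitely_complete C" and "protomodular C"
    and "X \<in> Obj C"
    and "generic_split_ext C X k p i"
    and "conjugation C X k p i c"
  shows "((\<exists>k' p' i'. generic_split_ext C (Cod C p) k' p' i') \<and> characteristic_mono C c)
         \<longleftrightarrow> (trivial_center C X \<and> strong_complete C (Cod C p))"
proof -
  interpret pcat C using assms(1-4) by unfold_locales
  obtain P \<pi>1 \<pi>2 d e v where cj: "is_product C X X P \<pi>1 \<pi>2"
        "d \<in> hom C X P" "zero_arr C (Comp C \<pi>1 d)" "Comp C \<pi>2 d = Id C X"
        "e \<in> hom C X P" "Comp C \<pi>1 e = Id C X" "Comp C \<pi>2 e = Id C X"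
        "split_ext_mor C d \<pi>1 e k p i v c"
    using assms(7) unfolding conjugation_def by blast
  interpret main C X "Dom C p" "Cod C p" k p i c P \<pi>1 \<pi>2 d e v
    by (unfold_locales) (use assms(5,6) cj in simp_all)
  show ?thesis
  proof
    assume L: "(\<exists>k' p' i'. generic_split_ext C (Cod C p) k' p' i') \<and> characteristic_mono C c"
    then have ch: "characteristic_mono C c" by simp
    show "trivial_center C X \<and> strong_complete C (Cod C p)"
      using mono_center[OF char_mono[OF ch]] dir1_sc[OF ch] by simp
  next
    assume R: "trivial_center C X \<and> strong_complete C (Cod C p)"
    show "(\<exists>k' p' i'. generic_split_ext C (Cod C p) k' p' i') \<and> characteristic_mono C c"
      using sc_generic[of "Cod C p"] dir2_char R by simp
  qed
qed

end
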